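(* Let $\Omega\subset\mathbb{R}^2$ be a domain and let $\psi$ be a non-constant real-analytic function on $\Omega$ satisfying $\{\psi,\Delta\psi\}=0$. Let $\Gamma$ be a curve contained in the critical set $\mathcal{C}(\psi)$. If $d_\psi(x_* )=2$ for some $x_*\in\Gamma$, then $d_\psi(x)=2$ for every $x$ in the connected component of $\{\nabla\psi=0\}$ containing $\Gamma$.
   Context: The Poisson bracket is $\{f,g\}=\partial_1 f\,\partial_2 g-\partial_2 f\,\partial_1 g$. For a non-constant real-analytic $f$ and a point $x$, $d_f(x)$ denotes the smallest integer $k\ge1$ such that $D^kf(x)\neq0$, and $\mathcal{C}(f)=\{x: d_f(x)>1\}$. *)

theory Defs
  imports "HOL-Analysis.Analysis"
begin

definition real_analytic_on :: "(real \<times> real \<Rightarrow> real) \<Rightarrow> (real \<times> real) set \<Rightarrow> bool" where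
  "real_analytic_on f \<Omega> \<longleftrightarrow>
     (\<forall>z\<in>\<Omega>. \<exists>r>0. \<exists>a :: nat \<Rightarrow> nat \<Rightarrow> real.
        \<forall>p\<in>ball z r.
          (\<lambda>(i,j). \<bar>a i j * (fst p - fst z) ^ i * (snd p - snd z) ^ j\<bar>) summable_on UNIV \<and>
          ((\<lambda>(i,j). a i j * (fst p - fst z) ^ i * (snd p - snd z) ^ j) has_sum f p) UNIV)"

definition partial1 :: "(real \<times> real \<Rightarrow> real) \<Rightarrow> real \<times> real \<Rightarrow> real" where
  "partial1 f = (\<lambda>p. deriv (\<lambda>t. f (t, snd p)) (fst p))"

definition partial2 :: "(real \<times> real \<Rightarrow> real) \<Rightarrow> real \<times> real \<Rightarrow> real" where
  "partial2 f = (\<lambda>p. deriv (\<lambda>t. f (fst p, t)) (snd p))"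

definition laplacian :: "(real \<times> real \<Rightarrow> real) \<Rightarrow> real \<times> real \<Rightarrow> real" where
  "laplacian f = (\<lambda>p. partial1 (partial1 f) p + partial2 (partial2 f) p)"

definition poisson_bracket ::
  "(real \<times> real \<Rightarrow> real) \<Rightarrow> (real \<times> real \<Rightarrow> real) \<Rightarrow> real \<times> real \<Rightarrow> real" where
  "poisson_bracket f g = (\<lambda>p. partial1 f p * partial2 g p - partial2 f p * partial1 g p)"

text \<open>\<open>D^k f(x) \<noteq> 0\<close>: the k-th derivative (symmetric k-linear form) is nonzero,
  i.e. some partial derivative of order k is nonzero.\<close>
definition Dk_nonzero :: "(real \<times> real \<Rightarrow> real) \<Rightarrow> nat \<Rightarrow> real \<times> real \<Rightarrow> bool" where
  "Dk_nonzero f k x \<longleftrightarrow> (\<exists>i j. i + j = k \<and> (partial1 ^^ i) ((partial2 ^^ j) f) x \<noteq> 0)"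

definition vanishing_order :: "(real \<times> real \<Rightarrow> real) \<Rightarrow> real \<times> real \<Rightarrow> nat" where
  "vanishing_order f x = (LEAST k. 1 \<le> k \<and> Dk_nonzero f k x)"

definition critical_set :: "(real \<times> real \<Rightarrow> real) \<Rightarrow> (real \<times> real) set \<Rightarrow> (real \<times> real) set" where
  "critical_set f \<Omega> = {x\<in>\<Omega>. vanishing_order f x > 1}"

end

theory Submission
  imports Defs
begin


definition ser :: "(nat \<Rightarrow> nat \<Rightarrow> real) \<Rightarrow> real\<times>real \<Rightarrow> real \<Rightarrow> (real\<times>real \<Rightarrow> real) \<Rightarrow> bool" where
 "ser a z r f \<longleftrightarrow> r > 0 \<and> (\<forall>p\<in>ball z r.
    (\<lambda>(i,j). \<bar>a i j * (fst p - fst z) ^ i * (snd p - snd z) ^ j\<bar>) summable_on UNIV \<and>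
    ((\<lambda>(i,j). a i j * (fst p - fst z) ^ i * (snd p - snd z) ^ j) has_sum f p) UNIV)"

lemma analytic_ser: "real_analytic_on f \<Omega> \<longleftrightarrow> (\<forall>z\<in>\<Omega>. \<exists>r a. ser a z r f)"
  unfolding real_analytic_on_def ser_def by blast

lemma has_sum_diff':
  fixes f g :: "'a \<Rightarrow> real"
  assumes "(f has_sum a) A" "(g has_sum b) A"
  shows "((\<lambda>x. f x - g x) has_sum (a - b)) A"
  using has_sum_add[OF assms(1) has_sum_cmult_right[OF assms(2), of "-1"]] by simp

lemma geom1: assumes "\<bar>x\<bar> < (1::real)" shows "summable (\<lambda>n. real (Suc n) * x^n)"
proof -
  have "summable (\<lambda>n. diffs (\<lambda>_. 1::real) n * x^n)"
    by (rule termdiff_converges[where K=1]) (use assms in \<open>auto intro: summable_geometric\<close>)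
  thus ?thesis by (simp add: diffs_def)
qed

lemma geom2: assumes "\<bar>x\<bar> < (1::real)" shows "summable (\<lambda>n. real (Suc n) * real (Suc (Suc n)) * x^n)"
proof -
  have "summable (\<lambda>n. diffs (\<lambda>n. real (Suc n)) n * x^n)"
    by (rule termdiff_converges[where K=1]) (use assms geom1 in auto)
  thus ?thesis by (simp add: diffs_def)
qed

lemma sumon_nat: assumes "\<And>n. f n \<ge> (0::real)" "summable f" shows "f summable_on UNIV"
  using summable_on_UNIV_nonneg_real_iff assms by blast

lemma prod_summable:
  fixes F G :: "nat \<Rightarrow> real"
  assumes "\<And>i. F i \<ge> 0" "\<And>j. G j \<ge> 0" "F summable_on UNIV" "G summable_on UNIV"
  shows "(\<lambda>(i,j). F i * G j) summable_on UNIV"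
proof -
  have "(\<lambda>(i,j). F i * G j) summable_on Sigma UNIV (\<lambda>_. UNIV)"
  proof (rule summable_on_SigmaI[where g = "\<lambda>i. F i * infsum G UNIV"])
    show "((\<lambda>j. (\<lambda>(i,j). F i * G j) (i,j)) has_sum F i * infsum G UNIV) UNIV" for i
      using has_sum_cmult_right[OF has_sum_infsum[OF assms(4)]] by simp
    show "(\<lambda>i. F i * infsum G UNIV) summable_on UNIV" using summable_on_cmult_left assms(3) by blast
    show "(\<lambda>(i,j). F i * G j) (x,y) \<ge> 0" for x y using assms by simp
  qed
  thus ?thesis by simp
qed

lemma geoms:
  fixes q :: real assumes "0 \<le> q" "q < 1"
  shows "(\<lambda>j. q^j) summable_on UNIV"
    and "(\<lambda>i. real (Suc i) * q^i) summable_on UNIV"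
    and "(\<lambda>i. real i * q^i) summable_on UNIV"
    and "(\<lambda>i. real i ^ 2 * q^i) summable_on UNIV"
proof -
  have a: "\<bar>q\<bar> < 1" using assms by simp
  show "(\<lambda>j. q^j) summable_on UNIV"
    by (rule sumon_nat) (use assms a summable_geometric in auto)
  show G1: "(\<lambda>i. real (Suc i) * q^i) summable_on UNIV"
    by (rule sumon_nat) (use assms geom1[OF a] in auto)
  show "(\<lambda>i. real i * q^i) summable_on UNIV"
    by (rule summable_on_comparison_test[OF G1]) (use assms in \<open>auto intro!: mult_right_mono\<close>)
  have G2: "(\<lambda>i. real (Suc i) * real (Suc (Suc i)) * q^i) summable_on UNIV"
    by (rule sumon_nat) (use assms geom2[OF a] in auto)
  show "(\<lambda>i. real i ^ 2 * q^i) summable_on UNIV"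
  proof (rule summable_on_comparison_test[OF G2])
    fix i
    have "real i ^ 2 \<le> real (Suc i) * real (Suc (Suc i))" by (simp add: power2_eq_square mult_mono)
    thus "real i ^ 2 * q^i \<le> real (Suc i) * real (Suc (Suc i)) * q^i"
      using assms by (intro mult_right_mono) auto
  qed (use assms in auto)
qed

lemma sqrt_lt: "0 < r \<Longrightarrow> x < r^2 \<Longrightarrow> sqrt x < r"
  by (metis abs_of_pos real_sqrt_abs real_sqrt_less_iff)

lemma in_ball_pair:
  assumes "\<bar>x - fst z\<bar> \<le> s" "\<bar>y - snd z\<bar> \<le> t" "sqrt (s^2 + t^2) < r"
  shows "(x,y) \<in> ball z r"
proof -
  have "dist z (x,y) = sqrt ((fst z - x)^2 + (snd z - y)^2)"
    by (cases z) (simp add: dist_Pair_Pair dist_real_def)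
  also have "\<dots> \<le> sqrt (s^2 + t^2)"
  proof (rule real_sqrt_le_mono, rule add_mono)
    show "(fst z - x)^2 \<le> s^2" using assms(1) by (metis abs_minus_commute power2_abs power_mono abs_ge_zero)
    show "(snd z - y)^2 \<le> t^2" using assms(2) by (metis abs_minus_commute power2_abs power_mono abs_ge_zero)
  qed
  finally show ?thesis using assms(3) by simp
qed

lemma ball_pair_bound:
  assumes "p \<in> ball z r" shows "\<bar>fst p - fst z\<bar> < r" "\<bar>snd p - snd z\<bar> < r"
proof -
  have "dist z p < r" using assms by simp
  moreover have pz: "p - z = (fst p - fst z, snd p - snd z)" by (cases p, cases z) simp
  then have "dist z p = norm (fst p - fst z, snd p - snd z)" by (simp add: dist_norm norm_minus_commute)
  moreover have "\<bar>fst p - fst z\<bar> \<le> dist z p" "\<bar>snd p - snd z\<bar> \<le> dist z p"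
    using norm_fst_le[of "fst p - fst z" "snd p - snd z"] norm_snd_le[of "snd p - snd z" "fst p - fst z"]
       \<open>dist z p = _\<close> by auto
  ultimately show "\<bar>fst p - fst z\<bar> < r" "\<bar>snd p - snd z\<bar> < r" by auto
qed

lemma ser_coef_bound:
  assumes "ser a z r f"
  obtains M where "\<And>i j. \<bar>a i j\<bar> * (r/2)^i * (r/2)^j \<le> M"
proof -
  have r: "r > 0" using assms by (simp add: ser_def)
  have "sqrt ((r/2)^2 + (r/2)^2) < r"
    using r by (intro sqrt_lt) (auto simp: power2_eq_square)
  then have p: "(fst z + r/2, snd z + r/2) \<in> ball z r" using r by (intro in_ball_pair[of _ z "r/2" _ "r/2"]) auto
  let ?g = "\<lambda>(i,j). \<bar>a i j * (r/2) ^ i * (r/2) ^ j\<bar>"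
  have sm: "?g summable_on UNIV" using assms p unfolding ser_def by fastforce
  show ?thesis
  proof (rule that[of "infsum ?g UNIV"])
    fix i j
    have "(?g has_sum ?g (i,j)) {(i,j)}" using has_sum_finite[of "{(i,j)}" ?g] by simp
    then have "?g (i,j) \<le> infsum ?g UNIV"
      by (rule has_sum_mono'[OF _ has_sum_infsum[OF sm]]) auto
    thus "\<bar>a i j\<bar> * (r/2)^i * (r/2)^j \<le> infsum ?g UNIV"
      using r by (simp add: abs_mult)
  qed
qed

lemma poly_err:
  fixes u s \<rho> :: real and i :: nat
  assumes "\<bar>u\<bar> \<le> \<rho>" "\<bar>u + s\<bar> \<le> \<rho>" "\<rho> > 0"
  shows "\<rho>^2 * \<bar>(u+s)^i - u^i - real i * s * u^(i-1)\<bar> \<le> real i ^ 2 * s^2 * \<rho>^i"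
proof (induction i)
  case 0 show ?case by simp
next
  case (Suc i)
  let ?E = "(u+s)^i - u^i - real i * s * u^(i-1)"
  have eq: "(u+s)^(Suc i) - u^(Suc i) - real (Suc i) * s * u^(Suc i - 1)
      = (u+s) * ?E + real i * s^2 * u^(i-1)"
    by (cases i) (simp_all add: algebra_simps power2_eq_square)
  have t2: "\<rho>^2 * \<bar>real i * s^2 * u^(i-1)\<bar> \<le> real i * s^2 * \<rho>^(Suc i)"
  proof (cases i)
    case 0 then show ?thesis by simp
  next
    case (Suc k)
    have e: "\<bar>real i * s^2 * u^(i-1)\<bar> = real i * s^2 * \<bar>u\<bar>^k" using Suc by (simp add: abs_mult power_abs)
    have "\<bar>u\<bar>^k \<le> \<rho>^k" using assms by (intro power_mono) auto
    then have "\<rho>^2 * (real i * s^2 * \<bar>u\<bar>^k) \<le> \<rho>^2 * (real i * s^2 * \<rho>^k)"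
      using assms by (intro mult_left_mono) auto
    also have "\<dots> = real i * s^2 * \<rho>^(Suc i)" using Suc by (simp add: power2_eq_square algebra_simps)
    finally show ?thesis using e by simp
  qed
  have t1: "\<rho>^2 * \<bar>(u+s) * ?E\<bar> \<le> \<rho> * (real i ^ 2 * s^2 * \<rho>^i)"
  proof -
    have "\<rho>^2 * \<bar>(u+s) * ?E\<bar> = \<bar>u+s\<bar> * (\<rho>^2 * \<bar>?E\<bar>)" by (simp add: abs_mult)
    also have "\<dots> \<le> \<rho> * (real i ^ 2 * s^2 * \<rho>^i)"
      by (rule mult_mono) (use Suc.IH assms in auto)
    finally show ?thesis .
  qed
  have "\<rho>^2 * \<bar>(u+s)^(Suc i) - u^(Suc i) - real (Suc i) * s * u^(Suc i - 1)\<bar>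
      \<le> \<rho>^2 * \<bar>(u+s) * ?E\<bar> + \<rho>^2 * \<bar>real i * s^2 * u^(i-1)\<bar>"
    unfolding eq distrib_left[symmetric] by (rule mult_left_mono[OF abs_triangle_ineq]) simp
  also have "\<dots> \<le> \<rho> * (real i ^ 2 * s^2 * \<rho>^i) + real i * s^2 * \<rho>^(Suc i)"
    using t1 t2 by linarith
  also have "\<dots> = (real i ^ 2 + real i) * s^2 * \<rho>^(Suc i)" by (simp add: algebra_simps)
  also have "\<dots> \<le> real (Suc i) ^ 2 * s^2 * \<rho>^(Suc i)"
    using assms by (intro mult_right_mono) (auto simp: power2_eq_square algebra_simps)
  finally show ?case .
qed



lemma aux_div: "(t::real) \<noteq> 0 \<Longrightarrow> t^2 * K / \<bar>t\<bar> = K * \<bar>t\<bar>"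
proof -
  assume t: "t \<noteq> 0"
  have "t^2 = \<bar>t\<bar> * \<bar>t\<bar>" by (simp add: power2_eq_square)
  then have "t^2 * K / \<bar>t\<bar> = \<bar>t\<bar> * (\<bar>t\<bar> * K) / \<bar>t\<bar>" by (simp only: mult.assoc)
  also have "\<dots> = \<bar>t\<bar> * K" using t by (simp only: nonzero_mult_div_cancel_left abs_eq_0 not_False_eq_True)
  finally show ?thesis by (simp add: mult.commute)
qed

lemma reindex_shift1:
  assumes "((\<lambda>(i,j). real i * c i j * u^(i-1) * v^j) has_sum D) UNIV"
  shows "((\<lambda>(i,j). real (Suc i) * c (Suc i) j * u^i * v^j) has_sum (D::real)) UNIV"
proof -
  let ?g = "\<lambda>(i,j). real i * c i j * u^(i-1) * v^j"
  let ?h = "\<lambda>(i::nat,j::nat). (Suc i, j)"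
  have "(?g has_sum D) (?h ` UNIV)"
  proof (rule has_sum_cong_neutral[THEN iffD1, OF _ _ _ assms])
    fix x assume x: "x \<in> UNIV - ?h ` UNIV"
    obtain i j where xij: "x = (i,j)" by (cases x)
    have "i = 0"
    proof (rule ccontr)
      assume "i \<noteq> 0" then obtain k where "i = Suc k" by (cases i) auto
      then have "x \<in> ?h ` UNIV" using xij by (auto simp: image_iff)
      then show False using x by simp
    qed
    then show "?g x = 0" using xij by simp
  qed auto
  then have "((?g \<circ> ?h) has_sum D) UNIV"
    by (subst has_sum_reindex[symmetric]) (auto simp: inj_on_def)
  moreover have "?g \<circ> ?h = (\<lambda>(i,j). real (Suc i) * c (Suc i) j * u^i * v^j)"
    by (auto simp: fun_eq_iff)
  ultimately show ?thesis by simp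
qed

lemma ser_center: assumes "ser a z r f" shows "f z = a 0 0"
proof -
  have "z \<in> ball z r" using assms by (simp add: ser_def)
  then have h: "((\<lambda>(i,j). a i j * (fst z - fst z) ^ i * (snd z - snd z) ^ j) has_sum f z) UNIV"
    using assms unfolding ser_def by blast
  have "((\<lambda>(i,j). a i j * (fst z - fst z) ^ i * (snd z - snd z) ^ j) has_sum a 0 0) UNIV"
    by (rule has_sum_finite_neutralI[where B="{(0,0)}"]) (auto simp: zero_power)
  then show ?thesis using h has_sum_unique by blast
qed

lemma partial1_ser:
  assumes S: "ser a z r f"
  shows "ser (\<lambda>i j. real (Suc i) * a (Suc i) j) z (r/4) (partial1 f)"
proof -
  have r: "r > 0" using S by (simp add: ser_def)
  obtain M where M: "\<And>i j. \<bar>a i j\<bar> * (r/2)^i * (r/2)^j \<le> M" using ser_coef_bound[OF S] by blast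
  define \<rho> where "\<rho> = r/3"
  define q where "q = (2/3::real)"
  have \<rho>: "\<rho> > 0" using r by (simp add: \<rho>_def)
  have q: "0 \<le> q" "q < 1" "q \<le> 1" by (auto simp: q_def)
  have M0: "M \<ge> 0" using M[of 0 0] by simp
  have bnd: "\<bar>a i j\<bar> * \<rho>^i * \<rho>^j \<le> M * q^i * q^j" for i j
  proof -
    have "\<rho>^i = (r/2)^i * q^i" "\<rho>^j = (r/2)^j * q^j"
      by (simp_all add: \<rho>_def q_def power_mult_distrib[symmetric])
    then have "\<bar>a i j\<bar> * \<rho>^i * \<rho>^j = (\<bar>a i j\<bar> * (r/2)^i * (r/2)^j) * (q^i * q^j)" by simp
    also have "\<dots> \<le> M * (q^i * q^j)" using M q by (intro mult_right_mono) auto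
    finally show ?thesis by simp
  qed
  have bnd': "\<bar>a i j\<bar> * \<bar>x\<bar>^i * \<bar>y\<bar>^j \<le> M * q^i * q^j" if "\<bar>x\<bar> \<le> \<rho>" "\<bar>y\<bar> \<le> \<rho>" for i j x y
  proof -
    have "\<bar>a i j\<bar> * \<bar>x\<bar>^i * \<bar>y\<bar>^j \<le> \<bar>a i j\<bar> * \<rho>^i * \<rho>^j"
      using that by (intro mult_mono power_mono) auto
    with bnd[of i j] show ?thesis by linarith
  qed
  have qs: "(\<lambda>j. q^j) summable_on UNIV" "(\<lambda>i. real (Suc i) * q^i) summable_on UNIV"
    "(\<lambda>i. real i * q^i) summable_on UNIV" "(\<lambda>i. real i ^ 2 * q^i) summable_on UNIV"
    using geoms[OF q(1,2)] by auto
  define B1 where "B1 = (\<lambda>(i::nat,j::nat). (M/\<rho> * (real (Suc i) * q^i)) * q^j)"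
  define Bd where "Bd = (\<lambda>(i::nat,j::nat). (M/\<rho> * (real i * q^i)) * q^j)"
  define B2 where "B2 = (\<lambda>(i::nat,j::nat). (M/\<rho>^2 * (real i ^ 2 * q^i)) * q^j)"
  have B1s: "B1 summable_on UNIV" unfolding B1_def
    by (rule prod_summable[OF _ _ summable_on_cmult_right[OF qs(2)] qs(1)]) (use M0 \<rho> q in auto)
  have Bds: "Bd summable_on UNIV" unfolding Bd_def
    by (rule prod_summable[OF _ _ summable_on_cmult_right[OF qs(3)] qs(1)]) (use M0 \<rho> q in auto)
  have B2s: "B2 summable_on UNIV" unfolding B2_def
    by (rule prod_summable[OF _ _ summable_on_cmult_right[OF qs(4)] qs(1)]) (use M0 \<rho> q in auto)
  define K0 where "K0 = infsum B2 UNIV"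
  have B2h: "(B2 has_sum K0) UNIV" using B2s by (simp add: K0_def)
  show ?thesis unfolding ser_def
  proof (intro conjI ballI)
    show "r/4 > 0" using r by simp
    fix p assume p: "p \<in> ball z (r/4)"
    define u where "u = fst p - fst z"
    define v where "v = snd p - snd z"
    have uv: "\<bar>u\<bar> < r/4" "\<bar>v\<bar> < r/4" using ball_pair_bound[OF p] by (auto simp: u_def v_def)
    have u\<rho>: "\<bar>u\<bar> \<le> \<rho>" and v\<rho>: "\<bar>v\<bar> \<le> \<rho>" using uv r by (auto simp: \<rho>_def)
    have shiftb0: "\<bar>a (Suc i) j\<bar> * \<bar>u\<bar>^i * \<bar>v\<bar>^j \<le> M/\<rho> * q^Suc i * q^j" for i j
    proof -
      have "\<rho> * (\<bar>a (Suc i) j\<bar> * \<bar>u\<bar>^i * \<bar>v\<bar>^j) \<le> \<rho> * (\<bar>a (Suc i) j\<bar> * \<rho>^i * \<rho>^j)"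
        using u\<rho> v\<rho> \<rho> by (intro mult_left_mono mult_mono power_mono) auto
      also have "\<dots> = \<bar>a (Suc i) j\<bar> * \<rho>^Suc i * \<rho>^j" by simp
      also have "\<dots> \<le> M * q^Suc i * q^j" by (rule bnd)
      finally show ?thesis using \<rho> by (simp add: field_simps)
    qed
    have shiftb: "\<bar>a (Suc i) j\<bar> * \<bar>u\<bar>^i * \<bar>v\<bar>^j \<le> M/\<rho> * q^i * q^j" for i j
    proof -
      have "q^Suc i \<le> q^i" by (rule power_decreasing) (use q in auto)
      then have "M/\<rho> * q^Suc i * q^j \<le> M/\<rho> * q^i * q^j" using q M0 \<rho> by (intro mult_right_mono mult_left_mono) auto
      with shiftb0[of i j] show ?thesis by linarith
    qed
    show "(\<lambda>(i,j). \<bar>real (Suc i) * a (Suc i) j * (fst p - fst z)^i * (snd p - snd z)^j\<bar>) summable_on UNIV"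
    proof (rule summable_on_comparison_test[OF B1s])
      fix x :: "nat \<times> nat" obtain i j where x: "x = (i,j)" by (cases x)
      have "real (Suc i) * (\<bar>a (Suc i) j\<bar> * \<bar>u\<bar>^i * \<bar>v\<bar>^j) \<le> real (Suc i) * (M/\<rho> * q^i * q^j)"
        using shiftb by (intro mult_left_mono) auto
      then show "(\<lambda>(i,j). \<bar>real (Suc i) * a (Suc i) j * (fst p - fst z)^i * (snd p - snd z)^j\<bar>) x \<le> B1 x"
        by (simp add: x B1_def u_def[symmetric] v_def[symmetric] abs_mult power_abs mult_ac)
    qed (auto simp: )
    define d where "d = (\<lambda>(i,j). real i * a i j * u^(i-1) * v^j)"
    have dB: "norm (d x) \<le> Bd x" for x
    proof -
      obtain i j where x: "x = (i,j)" by (cases x)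
      show ?thesis
      proof (cases i)
        case 0 then show ?thesis using M0 \<rho> q by (simp add: x d_def Bd_def)
      next
        case (Suc k)
        have "real i * (\<bar>a (Suc k) j\<bar> * \<bar>u\<bar>^k * \<bar>v\<bar>^j) \<le> real i * (M/\<rho> * q^Suc k * q^j)"
          using shiftb0 by (intro mult_left_mono) auto
        then show ?thesis using Suc by (simp add: x d_def Bd_def abs_mult power_abs mult_ac)
      qed
    qed
    have dsum: "d summable_on UNIV"
      by (rule abs_summable_summable, rule summable_on_comparison_test[OF Bds]) (use dB in auto)
    define D where "D = infsum d UNIV"
    have dh: "(d has_sum D) UNIV" using dsum by (simp add: D_def)
    have pin: "p \<in> ball z r" using p r by auto
    have h0: "((\<lambda>(i,j). a i j * u ^ i * v ^ j) has_sum f p) UNIV"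
      using S pin unfolding ser_def u_def v_def by blast
    have err: "\<bar>f (y, snd p) - f p - (y - fst p) * D\<bar> \<le> (y - fst p)^2 * K0"
      if y: "\<bar>y - fst p\<bar> < r/12" for y
    proof -
      define s where "s = y - fst p"
      have us: "\<bar>u + s\<bar> \<le> \<rho>" using y uv abs_triangle_ineq[of u s] by (simp add: s_def \<rho>_def)
      have yin: "(y, snd p) \<in> ball z r"
      proof (rule in_ball_pair[of _ z \<rho> _ "r/4"])
        show "\<bar>y - fst z\<bar> \<le> \<rho>" using us by (simp add: s_def u_def)
        show "\<bar>snd p - snd z\<bar> \<le> r/4" using uv by (simp add: v_def)
        show "sqrt (\<rho>^2 + (r/4)^2) < r" using r by (intro sqrt_lt) (auto simp: \<rho>_def power2_eq_square)
      qed
      have h1: "((\<lambda>(i,j). a i j * (u + s) ^ i * v ^ j) has_sum f (y, snd p)) UNIV"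
      proof -
        have "y - fst z = u + s" by (simp add: s_def u_def)
        then show ?thesis using S yin unfolding ser_def v_def by fastforce
      qed
      define e where "e = (\<lambda>(i,j). a i j * (u + s) ^ i * v ^ j - a i j * u ^ i * v ^ j - s * d (i,j))"
      have eh: "(e has_sum (f (y, snd p) - f p - s * D)) UNIV"
      proof -
        have "((\<lambda>x. (\<lambda>(i,j). a i j * (u + s) ^ i * v ^ j) x - (\<lambda>(i,j). a i j * u ^ i * v ^ j) x - s * d x)
           has_sum (f (y, snd p) - f p - s * D)) UNIV"
          by (intro has_sum_diff' h0 h1 has_sum_cmult_right dh)
        moreover have "e = (\<lambda>x. (\<lambda>(i,j). a i j * (u + s) ^ i * v ^ j) x - (\<lambda>(i,j). a i j * u ^ i * v ^ j) x - s * d x)"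
          unfolding e_def by (rule ext) (simp add: split_beta)
        ultimately show ?thesis by simp
      qed
      have eb: "norm (e x) \<le> s^2 * B2 x" for x
      proof -
        obtain i j where x: "x = (i,j)" by (cases x)
        let ?E = "(u+s)^i - u^i - real i * s * u^(i-1)"
        have ee: "e x = a i j * v^j * ?E" by (simp add: x e_def d_def algebra_simps)
        have "\<rho>^2 * \<bar>e x\<bar> = \<bar>a i j\<bar> * \<bar>v\<bar>^j * (\<rho>^2 * \<bar>?E\<bar>)"
          by (simp add: ee abs_mult power_abs mult_ac)
        also have "\<dots> \<le> \<bar>a i j\<bar> * \<bar>v\<bar>^j * (real i ^ 2 * s^2 * \<rho>^i)"
          by (intro mult_left_mono poly_err) (use u\<rho> us \<rho> in auto)
        also have "\<dots> \<le> \<bar>a i j\<bar> * \<rho>^j * (real i ^ 2 * s^2 * \<rho>^i)"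
          using v\<rho> \<rho> by (intro mult_right_mono mult_left_mono power_mono) auto
        also have "\<dots> = (real i ^ 2 * s^2) * (\<bar>a i j\<bar> * \<rho>^i * \<rho>^j)" by (simp add: mult_ac)
        also have "\<dots> \<le> (real i ^ 2 * s^2) * (M * q^i * q^j)" by (intro mult_left_mono bnd) auto
        also have "\<dots> = \<rho>^2 * (s^2 * B2 x)" using \<rho> by (simp add: x B2_def field_simps)
        finally show ?thesis using \<rho> by simp
      qed
      have "norm (f (y, snd p) - f p - s * D) \<le> s^2 * K0"
        by (rule norm_infsum_le[OF eh has_sum_cmult_right[OF B2h] eb])
      then show ?thesis by (simp add: s_def)
    qed
    have fp: "f p = f (fst p, snd p)" by simp
    have der: "((\<lambda>t. f (t, snd p)) has_real_derivative D) (at (fst p))"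
    proof -
      let ?x = "fst p"
      have "((\<lambda>y. (f (y, snd p) - f (?x, snd p)) / (y - ?x) - D) \<longlongrightarrow> 0) (at ?x)"
      proof (rule Lim_null_comparison)
        show "\<forall>\<^sub>F y in at ?x. norm ((f (y, snd p) - f (?x, snd p)) / (y - ?x) - D) \<le> K0 * \<bar>y - ?x\<bar>"
          unfolding eventually_at
        proof (rule exI[of _ "r/12"], intro conjI ballI impI)
          show "r/12 > 0" using r by simp
          fix y assume y: "y \<noteq> ?x \<and> dist y ?x < r/12"
          then have ne: "y - ?x \<noteq> 0" and yl: "\<bar>y - ?x\<bar> < r/12" by (auto simp: dist_real_def)
          have "(f (y, snd p) - f (?x, snd p)) / (y - ?x) - D = (f (y, snd p) - f p - (y - ?x) * D) / (y - ?x)"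
            using ne by (simp add: field_simps)
          then have "norm ((f (y, snd p) - f (?x, snd p)) / (y - ?x) - D) = \<bar>f (y, snd p) - f p - (y - ?x) * D\<bar> / \<bar>y - ?x\<bar>"
            by (simp add: abs_divide)
          also have "\<dots> \<le> (y - ?x)^2 * K0 / \<bar>y - ?x\<bar>"
            using err[OF yl] by (intro divide_right_mono) auto
          also have "\<dots> = K0 * \<bar>y - ?x\<bar>"
            using ne by (rule aux_div)
          finally show "norm ((f (y, snd p) - f (?x, snd p)) / (y - ?x) - D) \<le> K0 * \<bar>y - ?x\<bar>" .
        qed
        have "((\<lambda>y. K0 * \<bar>y - ?x\<bar>) \<longlongrightarrow> K0 * \<bar>?x - ?x\<bar>) (at ?x)" by (intro tendsto_intros)
        then show "((\<lambda>y. K0 * \<bar>y - ?x\<bar>) \<longlongrightarrow> 0) (at ?x)" by simp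
      qed
      then show ?thesis by (simp add: has_field_derivative_iff LIM_zero_iff)
    qed
    have "partial1 f p = D" unfolding partial1_def using DERIV_imp_deriv[OF der] by simp
    moreover have "((\<lambda>(i,j). real (Suc i) * a (Suc i) j * u^i * v^j) has_sum D) UNIV"
      by (rule reindex_shift1) (use dh in \<open>simp add: d_def\<close>)
    ultimately show "((\<lambda>(i,j). real (Suc i) * a (Suc i) j * (fst p - fst z)^i * (snd p - snd z)^j) has_sum partial1 f p) UNIV"
      by (simp add: u_def v_def)
  qed
qed



lemma serD:
  assumes "ser a z r f" "p \<in> ball z r"
  shows "(\<lambda>(i,j). \<bar>a i j * (fst p - fst z) ^ i * (snd p - snd z) ^ j\<bar>) summable_on UNIV"
    "((\<lambda>(i,j). a i j * (fst p - fst z) ^ i * (snd p - snd z) ^ j) has_sum f p) UNIV"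
  using assms unfolding ser_def by auto

lemma ser_swap:
  assumes S: "ser a z r f"
  shows "ser (\<lambda>i j. a j i) (prod.swap z) r (f \<circ> prod.swap)"
  unfolding ser_def
proof (intro conjI ballI)
  show "r > 0" using S by (simp add: ser_def)
  fix p assume p: "p \<in> ball (prod.swap z) r"
  have ps: "prod.swap p \<in> ball z r"
  proof -
    have "dist z (prod.swap p) = dist (prod.swap z) p"
      by (cases z, cases p) (simp add: dist_Pair_Pair add.commute)
    then show ?thesis using p by simp
  qed
  let ?g = "\<lambda>(i,j). a i j * (fst (prod.swap p) - fst z) ^ i * (snd (prod.swap p) - snd z) ^ j"
  have h: "(?g has_sum f (prod.swap p)) UNIV" and sm: "(\<lambda>(i,j). \<bar>a i j * (fst (prod.swap p) - fst z) ^ i * (snd (prod.swap p) - snd z) ^ j\<bar>) summable_on UNIV"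
    using serD[OF S ps] by auto
  have bij: "bij_betw prod.swap (UNIV::(nat\<times>nat) set) UNIV" by simp
  have e1: "(\<lambda>x. ?g (prod.swap x)) = (\<lambda>(i,j). a j i * (fst p - fst (prod.swap z)) ^ i * (snd p - snd (prod.swap z)) ^ j)"
    by (rule ext) (simp add: split_beta mult.assoc mult.commute mult.left_commute)
  have e2: "(\<lambda>x. (\<lambda>(i,j). \<bar>a i j * (fst (prod.swap p) - fst z) ^ i * (snd (prod.swap p) - snd z) ^ j\<bar>) (prod.swap x))
     = (\<lambda>(i,j). \<bar>a j i * (fst p - fst (prod.swap z)) ^ i * (snd p - snd (prod.swap z)) ^ j\<bar>)"
    by (rule ext) (simp add: split_beta abs_mult)
  let ?F = "\<lambda>(i,j). \<bar>a i j * (fst (prod.swap p) - fst z) ^ i * (snd (prod.swap p) - snd z) ^ j\<bar>"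
  have "(\<lambda>x. ?F (prod.swap x)) summable_on UNIV"
    by (subst summable_on_reindex_bij_betw[OF bij]) (rule sm)
  then show "(\<lambda>(i,j). \<bar>a j i * (fst p - fst (prod.swap z)) ^ i * (snd p - snd (prod.swap z)) ^ j\<bar>) summable_on UNIV"
    unfolding e2 .
  have "((\<lambda>x. ?g (prod.swap x)) has_sum f (prod.swap p)) UNIV"
    by (subst has_sum_reindex_bij_betw[OF bij]) (rule h)
  then show "((\<lambda>(i,j). a j i * (fst p - fst (prod.swap z)) ^ i * (snd p - snd (prod.swap z)) ^ j) has_sum (f \<circ> prod.swap) p) UNIV"
    unfolding e1 o_apply .
qed

lemma partial2_swap: "partial2 f = partial1 (f \<circ> prod.swap) \<circ> prod.swap"
  by (auto simp: fun_eq_iff partial1_def partial2_def o_def)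

lemma partial2_ser:
  assumes S: "ser a z r f"
  shows "ser (\<lambda>i j. real (Suc j) * a i (Suc j)) z (r/4) (partial2 f)"
proof -
  have "ser (\<lambda>i j. real (Suc i) * a j (Suc i)) (prod.swap z) (r/4) (partial1 (f \<circ> prod.swap))"
    using partial1_ser[OF ser_swap[OF S]] by simp
  from ser_swap[OF this] show ?thesis by (simp add: partial2_swap)
qed

lemma ser_mono: "ser a z r f \<Longrightarrow> 0 < r' \<Longrightarrow> r' \<le> r \<Longrightarrow> ser a z r' f"
  unfolding ser_def by auto

lemma ser_partial1_center: "ser a z r f \<Longrightarrow> partial1 f z = a 1 0"
  using ser_center[OF partial1_ser] by simp

lemma ser_partial2_center: "ser a z r f \<Longrightarrow> partial2 f z = a 0 1"
  using ser_center[OF partial2_ser] by simp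

lemma ser_deriv:
  assumes S: "ser a z r f"
  shows "(f has_derivative (\<lambda>h. a 1 0 * fst h + a 0 1 * snd h)) (at z)"
proof -
  have r: "r > 0" using S by (simp add: ser_def)
  obtain M where M: "\<And>i j. \<bar>a i j\<bar> * (r/2)^i * (r/2)^j \<le> M" using ser_coef_bound[OF S] by blast
  have M0: "M \<ge> 0" using M[of 0 0] by simp
  define R where "R = r/2"
  have R: "R > 0" using r by (simp add: R_def)
  define W where "W = (\<lambda>(i::nat,j::nat). (1/2::real)^i * (1/2)^j)"
  have Ws: "W summable_on UNIV" unfolding W_def
    by (rule prod_summable) (use geoms(1)[of "1/2"] in auto)
  define K1 where "K1 = infsum W UNIV"
  have Wh: "(W has_sum K1) UNIV" using Ws by (simp add: K1_def)
  define C where "C = 4 * M * K1 / R^2"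
  have K10: "K1 \<ge> 0" unfolding K1_def W_def by (rule infsum_nonneg) auto
  have C0: "C \<ge> 0" using M0 K10 R by (simp add: C_def)
  have main: "\<bar>f (z + h) - f z - (a 1 0 * fst h + a 0 1 * snd h)\<bar> \<le> C * (norm h)^2"
    if hn: "norm h < r/4" for h
  proof -
    define \<eta> where "\<eta> = norm h"
    define t where "t = \<eta> / R"
    have t: "0 \<le> t" "t \<le> 1/2" using hn R by (auto simp: t_def \<eta>_def R_def field_simps)
    have h1: "\<bar>fst h\<bar> \<le> \<eta>" using norm_fst_le[of "fst h" "snd h"] by (simp add: \<eta>_def)
    have h2: "\<bar>snd h\<bar> \<le> \<eta>" using norm_snd_le[of "snd h" "fst h"] by (simp add: \<eta>_def)
    have zin: "z + h \<in> ball z r" using hn r by (simp add: dist_norm)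
    let ?g = "\<lambda>(i,j). a i j * fst h ^ i * snd h ^ j"
    have gh: "(?g has_sum f (z + h)) UNIV" using serD(2)[OF S zin] by simp
    let ?L = "\<lambda>(i,j). if i + j < 2 then a i j * fst h ^ i * snd h ^ j else 0"
    have Lh: "(?L has_sum (a 0 0 + a 1 0 * fst h + a 0 1 * snd h)) UNIV"
    proof (rule has_sum_finite_neutralI[where B="{(0,0),(1,0),(0,1)}"])
      show "x \<in> UNIV - {(0,0),(1,0),(0,1)} \<Longrightarrow> ?L x = 0" for x
      proof -
        assume x: "x \<in> UNIV - {(0,0),(1,0),(0,1)}"
        obtain i j where xij: "x = (i,j)" by (cases x)
        have "\<not> (i + j < 2)" using x xij by (cases i; cases j) auto
        then show ?thesis using xij by simp
      qed
    qed auto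
    let ?e = "\<lambda>x. ?g x - ?L x"
    have eh: "(?e has_sum (f (z + h) - (a 0 0 + a 1 0 * fst h + a 0 1 * snd h))) UNIV"
      by (rule has_sum_diff'[OF gh Lh])
    have eb: "norm (?e x) \<le> 4 * M * t^2 * W x" for x
    proof -
      obtain i j where x: "x = (i,j)" by (cases x)
      show ?thesis
      proof (cases "i + j < 2")
        case True then show ?thesis using x M0 t by (simp add: W_def)
      next
        case False
        then obtain k where k: "i + j = k + 2" by (metis add.commute le_Suc_ex not_less)
        have "\<bar>a i j * fst h ^ i * snd h ^ j\<bar> \<le> \<bar>a i j\<bar> * \<eta>^i * \<eta>^j"
          using h1 h2 by (simp add: abs_mult power_abs) (intro mult_mono power_mono, auto)
        also have "\<dots> = (\<bar>a i j\<bar> * R^i * R^j) * t^(i+j)"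
        proof -
          have et: "\<eta> = R * t" using R by (simp add: t_def)
          show ?thesis unfolding et power_mult_distrib power_add by (simp only: mult_ac)
        qed
        also have "\<dots> \<le> M * t^(i+j)" using M[of i j] t by (intro mult_right_mono) (auto simp: R_def)
        also have "M * t^(i+j) \<le> M * (t^2 * (1/2)^k)"
        proof -
          have "t^k \<le> (1/2)^k" by (rule power_mono) (use t in auto)
          then have "t^2 * t^k \<le> t^2 * (1/2)^k" by (rule mult_left_mono) simp
          moreover have "t^(i+j) = t^2 * t^k" unfolding k power_add by (simp only: mult.commute)
          ultimately show ?thesis using M0 by (simp add: mult_left_mono)
        qed
        also have "(1/2::real)^k = 4 * W x"
        proof -
          have "(1/2::real)^i * (1/2)^j = (1/2)^(k+2)" by (simp only: power_add[symmetric] k)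
          then show ?thesis by (simp add: W_def x)
        qed
        finally have "\<bar>a i j * fst h ^ i * snd h ^ j\<bar> \<le> 4 * M * t^2 * W x"
          by (simp add: mult_ac)
        then show ?thesis using False x by simp
      qed
    qed
    have "norm (f (z + h) - (a 0 0 + a 1 0 * fst h + a 0 1 * snd h)) \<le> 4 * M * t^2 * K1"
      by (rule norm_infsum_le[OF eh has_sum_cmult_right[OF Wh] eb])
    also have "4 * M * t^2 * K1 = C * (norm h)^2" using R by (simp add: C_def t_def \<eta>_def power_divide)
    finally show ?thesis using ser_center[OF S] by (simp add: algebra_simps)
  qed
  show ?thesis unfolding has_derivative_at_alt
  proof (intro conjI allI impI)
    show "bounded_linear (\<lambda>h. a 1 0 * fst h + a 0 1 * snd h)"
      by (intro bounded_linear_add bounded_linear_const_mult bounded_linear_fst bounded_linear_snd)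
    fix e :: real assume e: "e > 0"
    show "\<exists>d>0. \<forall>y. norm (y - z) < d \<longrightarrow> norm (f y - f z - (a 1 0 * fst (y - z) + a 0 1 * snd (y - z))) \<le> e * norm (y - z)"
    proof (rule exI[of _ "min (r/4) (e/(C+1))"], intro conjI allI impI)
      show "min (r/4) (e/(C+1)) > 0" using r e C0 by simp
      fix y assume y: "norm (y - z) < min (r/4) (e/(C+1))"
      have "norm (f y - f z - (a 1 0 * fst (y - z) + a 0 1 * snd (y - z))) \<le> C * (norm (y - z))^2"
        using main[of "y - z"] y by simp
      also have "\<dots> \<le> e * norm (y - z)"
      proof -
        have "C * norm (y - z) \<le> e"
        proof -
          have "C * norm (y - z) \<le> (C+1) * (e/(C+1))" using y C0 by (intro mult_mono) auto
          then show ?thesis using C0 by simp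
        qed
        then show ?thesis by (simp add: power2_eq_square) (metis mult.assoc mult_right_mono norm_ge_zero)
      qed
      finally show "norm (f y - f z - (a 1 0 * fst (y - z) + a 0 1 * snd (y - z))) \<le> e * norm (y - z)" .
    qed
  qed
qed



lemma an_partial1: "real_analytic_on f \<Omega> \<Longrightarrow> real_analytic_on (partial1 f) \<Omega>"
  unfolding analytic_ser using partial1_ser by blast

lemma an_partial2: "real_analytic_on f \<Omega> \<Longrightarrow> real_analytic_on (partial2 f) \<Omega>"
  unfolding analytic_ser using partial2_ser by blast

lemma an_deriv:
  assumes "real_analytic_on f \<Omega>" "z \<in> \<Omega>"
  shows "(f has_derivative (\<lambda>h. partial1 f z * fst h + partial2 f z * snd h)) (at z)"
proof -
  obtain r a where S: "ser a z r f" using assms unfolding analytic_ser by blast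
  show ?thesis using ser_deriv[OF S] ser_partial1_center[OF S] ser_partial2_center[OF S] by simp
qed

lemma an_cont:
  assumes "real_analytic_on f \<Omega>" shows "continuous_on \<Omega> f"
  by (rule continuous_at_imp_continuous_on) (use an_deriv[OF assms] has_derivative_continuous in blast)

lemma an_clairaut:
  assumes "real_analytic_on f \<Omega>" "z \<in> \<Omega>"
  shows "partial2 (partial1 f) z = partial1 (partial2 f) z"
proof -
  obtain r a where S: "ser a z r f" using assms unfolding analytic_ser by blast
  show ?thesis
    using ser_partial2_center[OF partial1_ser[OF S]] ser_partial1_center[OF partial2_ser[OF S]] by simp
qed

lemma ser_add:
  assumes A: "ser a z r f" and B: "ser b z s g"
  shows "ser (\<lambda>i j. a i j + b i j) z (min r s) (\<lambda>p. f p + g p)"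
  unfolding ser_def
proof (intro conjI ballI)
  show "min r s > 0" using A B by (simp add: ser_def)
  fix p assume p: "p \<in> ball z (min r s)"
  then have pr: "p \<in> ball z r" and ps: "p \<in> ball z s" by auto
  let ?u = "fst p - fst z" and ?v = "snd p - snd z"
  have sa: "(\<lambda>(i,j). \<bar>a i j * ?u ^ i * ?v ^ j\<bar>) summable_on UNIV" and ha: "((\<lambda>(i,j). a i j * ?u ^ i * ?v ^ j) has_sum f p) UNIV"
    using serD[OF A pr] by auto
  have sb: "(\<lambda>(i,j). \<bar>b i j * ?u ^ i * ?v ^ j\<bar>) summable_on UNIV" and hb: "((\<lambda>(i,j). b i j * ?u ^ i * ?v ^ j) has_sum g p) UNIV"
    using serD[OF B ps] by auto
  have "(\<lambda>x. (\<lambda>(i,j). \<bar>a i j * ?u ^ i * ?v ^ j\<bar>) x + (\<lambda>(i,j). \<bar>b i j * ?u ^ i * ?v ^ j\<bar>) x) summable_on UNIV"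
    by (rule summable_on_add[OF sa sb])
  then show "(\<lambda>(i,j). \<bar>(a i j + b i j) * ?u ^ i * ?v ^ j\<bar>) summable_on UNIV"
    by (rule summable_on_comparison_test) (auto simp: distrib_right abs_triangle_ineq)
  have "((\<lambda>x. (\<lambda>(i,j). a i j * ?u ^ i * ?v ^ j) x + (\<lambda>(i,j). b i j * ?u ^ i * ?v ^ j) x) has_sum (f p + g p)) UNIV"
    by (rule has_sum_add[OF ha hb])
  moreover have "(\<lambda>x. (\<lambda>(i,j). a i j * ?u ^ i * ?v ^ j) x + (\<lambda>(i,j). b i j * ?u ^ i * ?v ^ j) x)
     = (\<lambda>(i,j). (a i j + b i j) * ?u ^ i * ?v ^ j)"
    by (rule ext) (simp add: split_beta distrib_right)
  ultimately show "((\<lambda>(i,j). (a i j + b i j) * ?u ^ i * ?v ^ j) has_sum (f p + g p)) UNIV" by simp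
qed

lemma an_add: "real_analytic_on f \<Omega> \<Longrightarrow> real_analytic_on g \<Omega> \<Longrightarrow> real_analytic_on (\<lambda>p. f p + g p) \<Omega>"
  unfolding analytic_ser using ser_add by blast

lemma an_iter:
  assumes "real_analytic_on f \<Omega>"
  shows "real_analytic_on ((partial1^^i) ((partial2^^j) f)) \<Omega>"
proof -
  have "real_analytic_on ((partial2^^j) f) \<Omega>" by (induction j) (use assms an_partial2 in auto)
  then show ?thesis by (induction i) (use an_partial1 in auto)
qed

lemma ser_cong: "ser a z r f \<Longrightarrow> a = b \<Longrightarrow> ser b z r f" by simp

lemma ser_iter2:
  assumes "ser a z r f"
  shows "\<exists>r'. ser (\<lambda>k l. fact (l+j) / fact l * a k (l+j)) z r' ((partial2^^j) f)"
proof (induction j)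
  case 0 then show ?case using assms by (auto intro: ser_cong)
next
  case (Suc j)
  then obtain r' where S: "ser (\<lambda>k l. fact (l+j) / fact l * a k (l+j)) z r' ((partial2^^j) f)" by blast
  have "ser (\<lambda>k l. real (Suc l) * (fact (Suc l + j) / fact (Suc l) * a k (Suc l + j))) z (r'/4) ((partial2^^(Suc j)) f)"
    using partial2_ser[OF S] by simp
  moreover have "(\<lambda>k l. real (Suc l) * (fact (Suc l + j) / fact (Suc l) * a k (Suc l + j)))
     = (\<lambda>k l. fact (l + Suc j) / fact l * a k (l + Suc j))"
    by (auto simp: fun_eq_iff)
  ultimately show ?case by auto
qed

lemma ser_iter1:
  assumes "ser a z r f"
  shows "\<exists>r'. ser (\<lambda>k l. fact (k+i) / fact k * a (k+i) l) z r' ((partial1^^i) f)"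
proof (induction i)
  case 0 then show ?case using assms by (auto intro: ser_cong)
next
  case (Suc i)
  then obtain r' where S: "ser (\<lambda>k l. fact (k+i) / fact k * a (k+i) l) z r' ((partial1^^i) f)" by blast
  have "ser (\<lambda>k l. real (Suc k) * (fact (Suc k + i) / fact (Suc k) * a (Suc k + i) l)) z (r'/4) ((partial1^^(Suc i)) f)"
    using partial1_ser[OF S] by simp
  moreover have "(\<lambda>k l. real (Suc k) * (fact (Suc k + i) / fact (Suc k) * a (Suc k + i) l))
     = (\<lambda>k l. fact (k + Suc i) / fact k * a (k + Suc i) l)"
    by (auto simp: fun_eq_iff)
  ultimately show ?case by auto
qed

lemma ser_iter_center:
  assumes "ser a z r f"
  shows "(partial1^^i) ((partial2^^j) f) z = fact i * fact j * a i j"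
proof -
  obtain r' where S: "ser (\<lambda>k l. fact (l+j) / fact l * a k (l+j)) z r' ((partial2^^j) f)"
    using ser_iter2[OF assms] by blast
  obtain r'' where S2: "ser (\<lambda>k l. fact (k+i) / fact k * (fact (l+j) / fact l * a (k+i) (l+j))) z r'' ((partial1^^i) ((partial2^^j) f))"
    using ser_iter1[OF S, of i] by auto
  show ?thesis using ser_center[OF S2] by simp
qed

lemma const_partial:
  assumes "open V" "\<forall>y\<in>V. g y = c" "y \<in> V"
  shows "partial1 g y = 0" "partial2 g y = 0"
proof -
  obtain e where e: "e > 0" "ball y e \<subseteq> V" using assms openE by blast
  have "((\<lambda>t. g (t, snd y)) has_real_derivative 0) (at (fst y))"
  proof (rule has_field_derivative_transform_within_open[OF DERIV_const[of c] open_ball])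
    show "fst y \<in> ball (fst y) e" using e by simp
    fix t assume t: "t \<in> ball (fst y) e"
    have "(t, snd y) \<in> ball y e" using t by (cases y) (simp add: dist_Pair_Pair)
    then show "c = g (t, snd y)" using e assms by auto
  qed
  then show "partial1 g y = 0" unfolding partial1_def by (rule DERIV_imp_deriv)
  have "((\<lambda>t. g (fst y, t)) has_real_derivative 0) (at (snd y))"
  proof (rule has_field_derivative_transform_within_open[OF DERIV_const[of c] open_ball])
    show "snd y \<in> ball (snd y) e" using e by simp
    fix t assume t: "t \<in> ball (snd y) e"
    have "(fst y, t) \<in> ball y e" using t by (cases y) (simp add: dist_Pair_Pair)
    then show "c = g (fst y, t)" using e assms by auto
  qed
  then show "partial2 g y = 0" unfolding partial2_def by (rule DERIV_imp_deriv)
qed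

lemma const_iter1:
  assumes "open V" "\<forall>y\<in>V. g y = c"
  shows "\<forall>y\<in>V. (partial1^^n) g y = (if n = 0 then c else 0)"
proof (induction n)
  case 0 then show ?case using assms by simp
next
  case (Suc n)
  then show ?case using const_partial(1)[OF assms(1), of "(partial1^^n) g" "if n = 0 then c else 0"] by simp
qed

lemma const_iter2:
  assumes "open V" "\<forall>y\<in>V. g y = c"
  shows "\<forall>y\<in>V. (partial2^^n) g y = (if n = 0 then c else 0)"
proof (induction n)
  case 0 then show ?case using assms by simp
next
  case (Suc n)
  then show ?case using const_partial(2)[OF assms(1), of "(partial2^^n) g" "if n = 0 then c else 0"] by simp
qed

lemma const_iter:
  assumes "open V" "\<forall>y\<in>V. g y = c" "1 \<le> i + j" "y \<in> V"
  shows "(partial1^^i) ((partial2^^j) g) y = 0"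
proof (cases "j = 0")
  case True
  then show ?thesis using const_iter1[OF assms(1,2), of i] assms(3,4) by auto
next
  case False
  then have "\<forall>y\<in>V. (partial2^^j) g y = 0" using const_iter2[OF assms(1,2), of j] by auto
  then show ?thesis using const_iter1[OF assms(1), of "(partial2^^j) g" 0 i] assms(4) by auto
qed



lemma ser_zero_const:
  assumes S: "ser a z r f" and Z: "\<forall>i j. 1 \<le> i + j \<longrightarrow> a i j = 0"
  shows "\<forall>p\<in>ball z r. f p = a 0 0"
proof
  fix p assume p: "p \<in> ball z r"
  have h: "((\<lambda>(i,j). a i j * (fst p - fst z) ^ i * (snd p - snd z) ^ j) has_sum f p) UNIV"
    using serD[OF S p] by auto
  have "((\<lambda>(i,j). a i j * (fst p - fst z) ^ i * (snd p - snd z) ^ j) has_sum a 0 0) UNIV"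
  proof (rule has_sum_finite_neutralI[where B="{(0,0)}"])
    fix x assume "x \<in> UNIV - {(0::nat,0::nat)}"
    then obtain i j where x: "x = (i,j)" "1 \<le> i + j" by (cases x) auto
    then show "(\<lambda>(i,j). a i j * (fst p - fst z) ^ i * (snd p - snd z) ^ j) x = 0" using Z by simp
  qed auto
  then show "f p = a 0 0" using h has_sum_unique by blast
qed

lemma an_nonzero_deriv:
  assumes op: "open \<Omega>" and co: "connected \<Omega>" and an: "real_analytic_on \<psi> \<Omega>"
    and nc: "\<not> (\<exists>c. \<forall>x\<in>\<Omega>. \<psi> x = c)" and x0: "x0 \<in> \<Omega>"
  shows "\<exists>k\<ge>1. Dk_nonzero \<psi> k x0"
proof (rule ccontr)
  assume "\<not> (\<exists>k\<ge>1. Dk_nonzero \<psi> k x0)"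
  then have z0: "\<forall>i j. 1 \<le> i + j \<longrightarrow> (partial1^^i) ((partial2^^j) \<psi>) x0 = 0"
    unfolding Dk_nonzero_def by auto
  define T where "T = {x\<in>\<Omega>. \<forall>i j. 1 \<le> i + j \<longrightarrow> (partial1^^i) ((partial2^^j) \<psi>) x = 0}"
  have "openin (top_of_set \<Omega>) T"
    unfolding openin_euclidean_subtopology_iff
  proof (intro conjI ballI)
    show "T \<subseteq> \<Omega>" by (auto simp: T_def)
    fix x assume x: "x \<in> T"
    then have xO: "x \<in> \<Omega>" by (simp add: T_def)
    obtain r a where S: "ser a x r \<psi>" using an xO unfolding analytic_ser by blast
    have Z: "\<forall>i j. 1 \<le> i + j \<longrightarrow> a i j = 0"
    proof (intro allI impI)
      fix i j :: nat assume ij: "1 \<le> i + j"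
      have "fact i * fact j * a i j = 0" using ser_iter_center[OF S, of i j] x ij by (simp add: T_def)
      then show "a i j = 0" by simp
    qed
    have c: "\<forall>p\<in>ball x r. \<psi> p = a 0 0" by (rule ser_zero_const[OF S Z])
    show "\<exists>e>0. \<forall>x'\<in>\<Omega>. dist x' x < e \<longrightarrow> x' \<in> T"
    proof (rule exI[of _ r], intro conjI ballI impI)
      show "r > 0" using S by (simp add: ser_def)
      fix x' assume x': "x' \<in> \<Omega>" "dist x' x < r"
      then have "x' \<in> ball x r" by (simp add: dist_commute)
      then show "x' \<in> T" using const_iter[OF open_ball c] x' by (auto simp: T_def)
    qed
  qed
  moreover have "closedin (top_of_set \<Omega>) T"
  proof -
    have "T = (\<Inter>ij\<in>{ij. 1 \<le> fst ij + snd ij}. {x\<in>\<Omega>. (partial1^^(fst ij)) ((partial2^^(snd ij)) \<psi>) x = 0})"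
    proof (rule set_eqI, rule iffI)
      fix x assume "x \<in> T" then show "x \<in> (\<Inter>ij\<in>{ij. 1 \<le> fst ij + snd ij}. {x\<in>\<Omega>. (partial1^^(fst ij)) ((partial2^^(snd ij)) \<psi>) x = 0})"
        by (auto simp: T_def)
    next
      fix x assume x: "x \<in> (\<Inter>ij\<in>{ij. 1 \<le> fst ij + snd ij}. {x\<in>\<Omega>. (partial1^^(fst ij)) ((partial2^^(snd ij)) \<psi>) x = 0})"
      have "(1::nat,0::nat) \<in> {ij. 1 \<le> fst ij + snd ij}" by simp
      then have "x \<in> \<Omega>" using x by blast
      then show "x \<in> T" using x by (auto simp: T_def)
    qed
    also have "closedin (top_of_set \<Omega>) \<dots>"
    proof (rule closedin_INT)
      show "{ij::nat\<times>nat. 1 \<le> fst ij + snd ij} \<noteq> {}"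
      proof -
        have "(1::nat,0::nat) \<in> {ij. 1 \<le> fst ij + snd ij}" by simp
        then show ?thesis by blast
      qed
      fix ij :: "nat \<times> nat"
      show "closedin (top_of_set \<Omega>) {x\<in>\<Omega>. (partial1^^(fst ij)) ((partial2^^(snd ij)) \<psi>) x = 0}"
        by (rule continuous_closedin_preimage_constant, rule an_cont, rule an_iter[OF an])
    qed
    finally show ?thesis .
  qed
  moreover have "x0 \<in> T" using z0 x0 by (simp add: T_def)
  ultimately have TO: "T = \<Omega>" using co unfolding connected_clopen by blast
  have "\<psi> constant_on \<Omega>"
  proof (rule has_derivative_zero_connected_constant_on[OF co op finite.emptyI])
    show "continuous_on \<Omega> \<psi>" by (rule an_cont[OF an])
    show "\<forall>x\<in>\<Omega> - {}. (\<psi> has_derivative (\<lambda>h. 0)) (at x within \<Omega>)"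
    proof
      fix x assume x: "x \<in> \<Omega> - {}"
      then have "x \<in> T" using TO by simp
      then have TT: "\<forall>i j. 1 \<le> i + j \<longrightarrow> (partial1^^i) ((partial2^^j) \<psi>) x = 0" by (simp add: T_def)
      have "partial1 \<psi> x = 0" using TT[rule_format, of 1 0] by simp
      moreover have "partial2 \<psi> x = 0" using TT[rule_format, of 0 1] by simp
      ultimately have "partial1 \<psi> x = 0" "partial2 \<psi> x = 0" by auto
      then show "(\<psi> has_derivative (\<lambda>h. 0)) (at x within \<Omega>)"
        using an_deriv[OF an, of x] x by (auto intro: has_derivative_at_withinI)
    qed
  qed
  then show False using nc unfolding constant_on_def by blast
qed



lemma sard1:
  fixes W :: "real \<Rightarrow> real"
  assumes der: "\<And>x. x \<in> Z \<Longrightarrow> (W has_derivative (\<lambda>h. 0)) (at x within Z)"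
  shows "negligible (W ` Z)"
proof -
  define f :: "real^1 \<Rightarrow> real^1" where "f = (\<lambda>y. vec (W (y$1)))"
  have "negligible (f ` (vec ` Z))"
  proof (rule baby_Sard[where f' = "\<lambda>x h. 0"])
    show "CARD(1) \<le> CARD(1)" by simp
    fix x :: "real^1" assume x: "x \<in> vec ` Z"
    then obtain z where z: "z \<in> Z" "x = vec z" by auto
    have "(W has_derivative (\<lambda>x. x * (\<lambda>_. 0::real) z)) (at z within Z)"
      using der[OF z(1)] by simp
    from has_derivative_vector_1[OF this]
    have "((\<lambda>x::real^1. vec (W (x $ 1)) :: real^1) has_derivative (\<lambda>h. 0)) (at (vec z) within vec ` Z)"
      by (rule has_derivative_eq_rhs) auto
    then have "((\<lambda>x::real^1. vec (W (x $ 1)) :: real^1) has_derivative (\<lambda>h. 0)) (at x within vec ` Z)"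
      using z(2) by simp
    then show "(f has_derivative (\<lambda>h. 0)) (at x within vec ` Z)" by (simp add: f_def)
    have "matrix (\<lambda>h::real^1. 0::real^1) = 0" by (simp add: matrix_def vec_eq_iff)
    then show "rank (matrix (\<lambda>h::real^1. 0::real^1)) < CARD(1)" by simp
  qed
  moreover have "f ` (vec ` Z) = vec ` (W ` Z)" by (auto simp: f_def image_image)
  ultimately have n: "negligible (vec ` (W ` Z) :: (real^1) set)" by simp
  have "negligible ((\<lambda>y::real^1. y$1) ` (vec ` (W ` Z)))"
  proof (rule negligible_differentiable_image_negligible[OF _ n])
    show "DIM(real^1) \<le> DIM(real)" by simp
    show "(\<lambda>y::real^1. y$1) differentiable_on vec ` (W ` Z)"
      by (rule bounded_linear_imp_differentiable_on) (rule bounded_linear_vec_nth)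
  qed
  moreover have "(\<lambda>y::real^1. y$1) ` (vec ` (W ` Z)) = W ` Z" by (auto simp: image_image)
  ultimately show ?thesis by simp
qed



lemma mvt_line:
  fixes Q Qx Qy :: "real\<times>real \<Rightarrow> real"
  assumes U: "convex U" and q: "q \<in> U" and q': "q' \<in> U"
    and dQ: "\<And>y. y \<in> U \<Longrightarrow> (Q has_derivative (\<lambda>h. Qx y * fst h + Qy y * snd h)) (at y)"
  shows "\<exists>\<xi>\<in>U. Q q' - Q q = Qx \<xi> * (fst q' - fst q) + Qy \<xi> * (snd q' - snd q)"
proof -
  define g where "g = (\<lambda>t::real. q + t *\<^sub>R (q' - q))"
  have gU: "g t \<in> U" if "0 \<le> t" "t \<le> 1" for t
  proof -
    have "(1 - t) *\<^sub>R q + t *\<^sub>R q' \<in> U" using convexD[OF U q q'] that by simp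
    moreover have "(1 - t) *\<^sub>R q + t *\<^sub>R q' = g t" by (simp add: g_def algebra_simps)
    ultimately show ?thesis by simp
  qed
  define D where "D = (\<lambda>t. Qx (g t) * (fst q' - fst q) + Qy (g t) * (snd q' - snd q))"
  have der: "((\<lambda>t. Q (g t)) has_real_derivative D t) (at t)" if "0 \<le> t" "t \<le> 1" for t
  proof -
    have dg: "(g has_derivative (\<lambda>s. s *\<^sub>R (q' - q))) (at t)"
      unfolding g_def by (rule has_derivative_eq_rhs, (rule derivative_intros)+) auto
    have "((\<lambda>t. Q (g t)) has_derivative (\<lambda>s. Qx (g t) * fst (s *\<^sub>R (q' - q)) + Qy (g t) * snd (s *\<^sub>R (q' - q)))) (at t)"
      by (rule has_derivative_compose[OF dg dQ[OF gU[OF that]]])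
    then show ?thesis unfolding has_field_derivative_def
      by (rule has_derivative_eq_rhs) (auto simp: fun_eq_iff D_def algebra_simps)
  qed
  obtain t where t: "0 < t" "t < 1" "Q (g 1) - Q (g 0) = (1 - 0) * D t"
    using MVT2[of 0 1 "\<lambda>t. Q (g t)" D] der by auto
  show ?thesis
    by (rule bexI[of _ "g t"]) (use t gU[of t] in \<open>auto simp: g_def D_def\<close>)
qed

lemma dy_identity:
  fixes P Q wx wy Px Py Qx Qy :: "real\<times>real \<Rightarrow> real"
  assumes U: "open U" and qa: "qa \<in> U" and z: "P qa = 0" "Q qa = 0"
    and dP: "(P has_derivative (\<lambda>h. Px qa * fst h + Py qa * snd h)) (at qa)"
    and dQ: "(Q has_derivative (\<lambda>h. Qx qa * fst h + Qy qa * snd h)) (at qa)"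
    and cx: "isCont wx qa" and cy: "isCont wy qa"
    and br: "\<forall>q\<in>U. P q * wy q - Q q * wx q = 0"
  shows "Py qa * wy qa - Qy qa * wx qa = 0"
proof -
  define g where "g = (\<lambda>t::real. (fst qa, snd qa + t))"
  have g0: "g 0 = qa" by (simp add: g_def)
  have dg: "(g has_derivative (\<lambda>s. (0, s))) (at 0)"
    unfolding g_def by (rule has_derivative_eq_rhs, (rule derivative_intros)+) auto
  have dP': "((\<lambda>t. P (g t)) has_real_derivative Py qa) (at 0)"
  proof -
    have "((\<lambda>t. P (g t)) has_derivative (\<lambda>s. Px qa * fst (0::real, s) + Py qa * snd (0::real, s))) (at 0)"
      by (rule has_derivative_compose[OF dg]) (use dP g0 in simp)
    then show ?thesis unfolding has_field_derivative_def
      by (rule has_derivative_eq_rhs) (auto simp: fun_eq_iff)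
  qed
  have dQ': "((\<lambda>t. Q (g t)) has_real_derivative Qy qa) (at 0)"
  proof -
    have "((\<lambda>t. Q (g t)) has_derivative (\<lambda>s. Qx qa * fst (0::real, s) + Qy qa * snd (0::real, s))) (at 0)"
      by (rule has_derivative_compose[OF dg]) (use dQ g0 in simp)
    then show ?thesis unfolding has_field_derivative_def
      by (rule has_derivative_eq_rhs) (auto simp: fun_eq_iff)
  qed
  have l1: "((\<lambda>t. P (g t) / t) \<longlongrightarrow> Py qa) (at 0)"
    using dP' unfolding has_field_derivative_iff by (simp add: g0 z)
  have l2: "((\<lambda>t. Q (g t) / t) \<longlongrightarrow> Qy qa) (at 0)"
    using dQ' unfolding has_field_derivative_iff by (simp add: g0 z)
  have gt: "(g \<longlongrightarrow> qa) (at 0)"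
  proof -
    have "(g \<longlongrightarrow> g 0) (at 0)" unfolding g_def by (intro tendsto_intros)
    then show ?thesis by (simp add: g0)
  qed
  have l3: "((\<lambda>t. wy (g t)) \<longlongrightarrow> wy qa) (at 0)" by (rule isCont_tendsto_compose[OF cy gt])
  have l4: "((\<lambda>t. wx (g t)) \<longlongrightarrow> wx qa) (at 0)" by (rule isCont_tendsto_compose[OF cx gt])
  have lim: "((\<lambda>t. P (g t) / t * wy (g t) - Q (g t) / t * wx (g t)) \<longlongrightarrow> Py qa * wy qa - Qy qa * wx qa) (at 0)"
    by (intro tendsto_intros l1 l2 l3 l4)
  have ev: "\<forall>\<^sub>F t in at 0. P (g t) / t * wy (g t) - Q (g t) / t * wx (g t) = 0"
  proof -
    have "\<forall>\<^sub>F t in at 0. g t \<in> U" using gt U qa by (rule topological_tendstoD)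
    then show ?thesis
    proof (rule eventually_mono)
      fix t assume "g t \<in> U"
      then have "P (g t) * wy (g t) - Q (g t) * wx (g t) = 0" using br by blast
      then have "(P (g t) * wy (g t) - Q (g t) * wx (g t)) / t = 0" by simp
      then show "P (g t) / t * wy (g t) - Q (g t) / t * wx (g t) = 0" by (simp add: diff_divide_distrib)
    qed
  qed
  have "((\<lambda>t. P (g t) / t * wy (g t) - Q (g t) / t * wx (g t)) \<longlongrightarrow> 0) (at 0)"
    by (rule tendsto_eventually[OF ev])
  from tendsto_unique[OF _ lim this] show ?thesis by simp
qed



lemma local_negl:
  fixes P Q w Px Py Qx Qy wx wy :: "real\<times>real \<Rightarrow> real"
  assumes U: "open U" "convex U"
    and dQ: "\<And>q. q \<in> U \<Longrightarrow> (Q has_derivative (\<lambda>h. Qx q * fst h + Qy q * snd h)) (at q)"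
    and dP: "\<And>q. q \<in> U \<Longrightarrow> (P has_derivative (\<lambda>h. Px q * fst h + Py q * snd h)) (at q)"
    and dw: "\<And>q. q \<in> U \<Longrightarrow> (w has_derivative (\<lambda>h. wx q * fst h + wy q * snd h)) (at q)"
    and cx: "continuous_on U wx" and cy: "continuous_on U wy"
    and sym: "\<And>q. q \<in> U \<Longrightarrow> Py q = Qx q"
    and br: "\<forall>q\<in>U. P q * wy q - Q q * wx q = 0"
    and c: "c > 0" "\<And>q. q \<in> U \<Longrightarrow> c \<le> \<bar>Qy q\<bar>"
    and K: "\<And>q. q \<in> U \<Longrightarrow> \<bar>Qx q\<bar> \<le> K"
  shows "negligible (w ` {q\<in>U. P q = 0 \<and> Q q = 0})"
proof -
  define T where "T = {q\<in>U. P q = 0 \<and> Q q = 0}"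
  have lip: "\<bar>snd q - snd q0\<bar> \<le> (K/c) * \<bar>fst q - fst q0\<bar>" if "q0 \<in> T" "q \<in> T" for q0 q
  proof -
    have inU: "q0 \<in> U" "q \<in> U" using that by (auto simp: T_def)
    obtain \<xi> where \<xi>: "\<xi> \<in> U" "Q q - Q q0 = Qx \<xi> * (fst q - fst q0) + Qy \<xi> * (snd q - snd q0)"
      using mvt_line[OF U(2) inU, of Q Qx Qy] dQ by blast
    have "Qy \<xi> * (snd q - snd q0) = - (Qx \<xi> * (fst q - fst q0))" using \<xi> that by (simp add: T_def)
    then have e: "\<bar>Qy \<xi>\<bar> * \<bar>snd q - snd q0\<bar> = \<bar>Qx \<xi>\<bar> * \<bar>fst q - fst q0\<bar>" by (metis abs_minus_cancel abs_mult)
    have "c * \<bar>snd q - snd q0\<bar> \<le> \<bar>Qy \<xi>\<bar> * \<bar>snd q - snd q0\<bar>" using c(2)[OF \<xi>(1)] by (rule mult_right_mono) simp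
    also have "\<dots> \<le> K * \<bar>fst q - fst q0\<bar>" unfolding e using K[OF \<xi>(1)] by (rule mult_right_mono) simp
    finally show ?thesis using c(1) by (simp add: field_simps)
  qed
  have uniq: "q = q0" if "q0 \<in> T" "q \<in> T" "fst q = fst q0" for q0 q
    using lip[OF that(1,2)] that(3) by (simp add: prod_eq_iff)
  define W where "W = (\<lambda>x. w (THE q. q \<in> T \<and> fst q = x))"
  have Wq: "W (fst q) = w q" if "q \<in> T" for q
  proof -
    have "(THE q'. q' \<in> T \<and> fst q' = fst q) = q"
      by (rule the_equality) (use that uniq in auto)
    then show ?thesis by (simp add: W_def)
  qed
  have img: "w ` T = W ` (fst ` T)" by (auto simp: image_image Wq)
  define L where "L = 1 + K/c"
  have nb: "norm (q - q0) \<le> L * \<bar>fst q - fst q0\<bar>" if "q0 \<in> T" "q \<in> T" for q0 q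
  proof -
    have "q - q0 = (fst q - fst q0, snd q - snd q0)" by (cases q, cases q0) simp
    then have "norm (q - q0) = norm (fst q - fst q0, snd q - snd q0)" by simp
    also have "\<dots> \<le> \<bar>fst q - fst q0\<bar> + \<bar>snd q - snd q0\<bar>" using norm_Pair_le[of "fst q - fst q0" "snd q - snd q0"] by (simp only: real_norm_def)
    also have "\<dots> \<le> \<bar>fst q - fst q0\<bar> + (K/c) * \<bar>fst q - fst q0\<bar>" using lip[OF that] by simp
    finally show ?thesis by (simp add: L_def algebra_simps)
  qed
  have "negligible (W ` (fst ` T))"
  proof (rule sard1)
    fix x0 assume "x0 \<in> fst ` T"
    then obtain q0 where q0: "q0 \<in> T" "x0 = fst q0" by auto
    have q0U: "q0 \<in> U" using q0 by (simp add: T_def)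
    have K0: "K \<ge> 0" using K[OF q0U] by simp
    have L1: "L \<ge> 1" using K0 c by (simp add: L_def)
    have Qyc: "c \<le> \<bar>Qy q0\<bar>" by (rule c(2)[OF q0U])
    have Qy0: "Qy q0 \<noteq> 0" using Qyc c by auto
    have ident: "Py q0 * wy q0 - Qy q0 * wx q0 = 0"
    proof (rule dy_identity[where P=P and Q=Q and wx=wx and wy=wy and Px=Px and Py=Py and Qx=Qx and Qy=Qy and U=U and qa=q0, OF U(1) q0U _ _ dP[OF q0U] dQ[OF q0U] _ _ br])
      show "P q0 = 0" "Q q0 = 0" using q0 by (auto simp: T_def)
      show "isCont wx q0" using cx U(1) q0U continuous_on_eq_continuous_at by blast
      show "isCont wy q0" using cy U(1) q0U continuous_on_eq_continuous_at by blast
    qed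
    then have ident': "wx q0 = Qx q0 * wy q0 / Qy q0" using sym[OF q0U] Qy0 by (simp add: field_simps)
    define A where "A = \<bar>wy q0\<bar> / c"
    have A0: "A \<ge> 0" using c by (simp add: A_def)
    show "(W has_derivative (\<lambda>h. 0)) (at x0 within fst ` T)"
      unfolding has_derivative_within_alt
    proof (intro conjI allI impI)
      show "bounded_linear (\<lambda>h::real. 0::real)" by (rule bounded_linear_zero)
      fix e :: real assume e: "e > 0"
      define e1 where "e1 = e / (2 * L)"
      define e2 where "e2 = e / (2 * L * (A + 1))"
      have e1p: "e1 > 0" and e2p: "e2 > 0" using e L1 A0 by (auto simp: e1_def e2_def)
      obtain d1 where d1: "d1 > 0" "\<And>y. norm (y - q0) < d1 \<Longrightarrow>
          norm (w y - w q0 - (wx q0 * fst (y - q0) + wy q0 * snd (y - q0))) \<le> e1 * norm (y - q0)"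
        using dw[OF q0U] e1p unfolding has_derivative_at_alt by meson
      obtain d2 where d2: "d2 > 0" "\<And>y. norm (y - q0) < d2 \<Longrightarrow>
          norm (Q y - Q q0 - (Qx q0 * fst (y - q0) + Qy q0 * snd (y - q0))) \<le> e2 * norm (y - q0)"
        using dQ[OF q0U] e2p unfolding has_derivative_at_alt by meson
      show "\<exists>d>0. \<forall>y\<in>fst ` T. norm (y - x0) < d \<longrightarrow> norm (W y - W x0 - 0) \<le> e * norm (y - x0)"
      proof (rule exI[of _ "min d1 d2 / L"], intro conjI ballI impI)
        show "min d1 d2 / L > 0" using d1 d2 L1 by simp
        fix y assume y: "y \<in> fst ` T" and yd: "norm (y - x0) < min d1 d2 / L"
        then obtain q where q: "q \<in> T" "y = fst q" by auto
        define dx where "dx = fst q - fst q0"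
        define dy where "dy = snd q - snd q0"
        define nq where "nq = norm (q - q0)"
        have nqb: "nq \<le> L * \<bar>dx\<bar>" using nb[OF q0(1) q(1)] by (simp add: nq_def dx_def)
        have dxd: "\<bar>dx\<bar> < min d1 d2 / L" using yd q q0 by (simp add: dx_def)
        have "L * \<bar>dx\<bar> < min d1 d2" using dxd L1 by (simp add: field_simps)
        then have nq1: "nq < d1" and nq2: "nq < d2" using nqb by auto
        have i1: "\<bar>w q - w q0 - (wx q0 * dx + wy q0 * dy)\<bar> \<le> e1 * nq"
          using d1(2)[of q] nq1 by (simp add: nq_def dx_def dy_def)
        have QT: "Q q = 0" "Q q0 = 0" using q(1) q0(1) by (auto simp: T_def)
        have i2: "\<bar>Qx q0 * dx + Qy q0 * dy\<bar> \<le> e2 * nq"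
          using d2(2)[of q] nq2 QT by (simp add: nq_def dx_def dy_def)
        have key: "wx q0 * dx + wy q0 * dy = (wy q0 / Qy q0) * (Qx q0 * dx + Qy q0 * dy)"
          using Qy0 by (simp add: ident' field_simps)
        have "\<bar>wx q0 * dx + wy q0 * dy\<bar> = (\<bar>wy q0\<bar> / \<bar>Qy q0\<bar>) * \<bar>Qx q0 * dx + Qy q0 * dy\<bar>"
          unfolding key by (simp add: abs_mult abs_divide)
        also have "\<dots> \<le> A * (e2 * nq)"
        proof (rule mult_mono)
          show "\<bar>wy q0\<bar> / \<bar>Qy q0\<bar> \<le> A" unfolding A_def using Qyc c by (intro divide_left_mono) auto
        qed (use i2 A0 in auto)
        finally have i3: "\<bar>wx q0 * dx + wy q0 * dy\<bar> \<le> A * (e2 * nq)" .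
        have Ae2: "A * e2 \<le> e / (2 * L)"
        proof -
          have "A * e2 = (A / (A + 1)) * (e / (2 * L))" using A0 L1 by (simp add: e2_def field_simps)
          also have "\<dots> \<le> 1 * (e / (2 * L))" using A0 e L1 by (intro mult_right_mono) auto
          finally show ?thesis by simp
        qed
        have "\<bar>w q - w q0\<bar> \<le> e1 * nq + A * (e2 * nq)" using i1 i3 by linarith
        also have "\<dots> \<le> e / (2 * L) * nq + e / (2 * L) * nq"
        proof -
          have "(A * e2) * nq \<le> e / (2 * L) * nq" by (rule mult_right_mono[OF Ae2]) (simp add: nq_def)
          then show ?thesis by (simp add: e1_def mult.assoc)
        qed
        also have "\<dots> = (e / L) * nq" by (simp add: field_simps)
        also have "\<dots> \<le> (e / L) * (L * \<bar>dx\<bar>)" using nqb e L1 by (intro mult_left_mono) auto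
        also have "\<dots> = e * \<bar>dx\<bar>" using L1 by simp
        finally have "\<bar>w q - w q0\<bar> \<le> e * \<bar>dx\<bar>" .
        then show "norm (W y - W x0 - 0) \<le> e * norm (y - x0)"
          using Wq[OF q(1)] Wq[OF q0(1)] q q0 by (simp add: dx_def)
      qed
    qed
  qed
  then show ?thesis using img by (simp add: T_def)
qed



lemma Dk1: "Dk_nonzero f 1 x \<longleftrightarrow> partial1 f x \<noteq> 0 \<or> partial2 f x \<noteq> 0"
proof -
  have e: "i + j = 1 \<longleftrightarrow> (i = 1 \<and> j = 0) \<or> (i = 0 \<and> j = (1::nat))" for i j by arith
  show ?thesis unfolding Dk_nonzero_def e by (simp add: conj_disj_distribR ex_disj_distrib)
qed

lemma Dk2: "Dk_nonzero f 2 x \<longleftrightarrow> partial1 (partial1 f) x \<noteq> 0 \<or> partial1 (partial2 f) x \<noteq> 0 \<or> partial2 (partial2 f) x \<noteq> 0"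
proof -
  have e: "i + j = 2 \<longleftrightarrow> (i = 2 \<and> j = 0) \<or> (i = 1 \<and> j = 1) \<or> (i = 0 \<and> j = (2::nat))" for i j by arith
  show ?thesis unfolding Dk_nonzero_def e by (simp add: conj_disj_distribR ex_disj_distrib numeral_2_eq_2)
qed

lemma vo_gt1_grad: "vanishing_order f x > 1 \<Longrightarrow> partial1 f x = 0 \<and> partial2 f x = 0"
proof (rule ccontr)
  assume v: "vanishing_order f x > 1" and "\<not> (partial1 f x = 0 \<and> partial2 f x = 0)"
  then have "1 \<le> (1::nat) \<and> Dk_nonzero f 1 x" using Dk1[of f x] by blast
  then have "vanishing_order f x \<le> 1" unfolding vanishing_order_def by (rule Least_le)
  then show False using v by simp
qed

lemma vo_eq2:
  assumes "partial1 f x = 0" "partial2 f x = 0" "Dk_nonzero f 2 x"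
  shows "vanishing_order f x = 2"
  unfolding vanishing_order_def
proof (rule Least_equality)
  show "1 \<le> (2::nat) \<and> Dk_nonzero f 2 x" using assms by simp
  fix y assume y: "1 \<le> y \<and> Dk_nonzero f y x"
  have "\<not> Dk_nonzero f 1 x" using assms Dk1[of f x] by blast
  then have "y \<noteq> 1" using y by metis
  then show "2 \<le> y" using y by simp
qed

lemma isolated_zero:
  fixes P Q :: "real\<times>real \<Rightarrow> real"
  assumes dP: "(P has_derivative (\<lambda>h. a * fst h + b * snd h)) (at q0)"
    and dQ: "(Q has_derivative (\<lambda>h. b * fst h + d * snd h)) (at q0)"
    and z: "P q0 = 0" "Q q0 = 0" and tr: "a + d = 0" and nz: "a \<noteq> 0 \<or> b \<noteq> 0"
  shows "\<exists>e>0. \<forall>y. dist y q0 < e \<and> P y = 0 \<and> Q y = 0 \<longrightarrow> y = q0"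
proof -
  define k2 where "k2 = a^2 + b^2"
  have k2: "k2 > 0" using nz by (auto simp: k2_def add_pos_nonneg add_nonneg_pos)
  define \<epsilon> where "\<epsilon> = sqrt k2 / 2"
  have \<epsilon>: "\<epsilon> > 0" using k2 by (simp add: \<epsilon>_def)
  obtain d1 where d1: "d1 > 0" "\<And>y. norm (y - q0) < d1 \<Longrightarrow>
      norm (P y - P q0 - (a * fst (y - q0) + b * snd (y - q0))) \<le> \<epsilon> * norm (y - q0)"
    using dP \<epsilon> unfolding has_derivative_at_alt by meson
  obtain d2 where d2: "d2 > 0" "\<And>y. norm (y - q0) < d2 \<Longrightarrow>
      norm (Q y - Q q0 - (b * fst (y - q0) + d * snd (y - q0))) \<le> \<epsilon> * norm (y - q0)"
    using dQ \<epsilon> unfolding has_derivative_at_alt by meson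
  show ?thesis
  proof (rule exI[of _ "min d1 d2"], intro conjI allI impI)
    show "min d1 d2 > 0" using d1 d2 by simp
    fix y assume y: "dist y q0 < min d1 d2 \<and> P y = 0 \<and> Q y = 0"
    define h1 where "h1 = fst (y - q0)"
    define h2 where "h2 = snd (y - q0)"
    define n where "n = norm (y - q0)"
    have n2: "n^2 = h1^2 + h2^2"
    proof -
      have "y - q0 = (h1, h2)" by (cases y, cases q0) (simp add: h1_def h2_def)
      then show ?thesis by (simp add: n_def norm_Pair)
    qed
    have X: "\<bar>a * h1 + b * h2\<bar> \<le> \<epsilon> * n" using d1(2)[of y] y z by (simp add: dist_norm h1_def h2_def n_def)
    have Y: "\<bar>b * h1 - a * h2\<bar> \<le> \<epsilon> * n"
    proof -
      have "d = - a" using tr by simp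
      then show ?thesis using d2(2)[of y] y z by (simp add: dist_norm h1_def h2_def n_def)
    qed
    have n0: "n \<ge> 0" by (simp add: n_def)
    have "(a * h1 + b * h2)^2 \<le> (\<epsilon> * n)^2" using X \<epsilon> n0 by (metis abs_ge_zero power2_abs power_mono)
    moreover have "(b * h1 - a * h2)^2 \<le> (\<epsilon> * n)^2" using Y \<epsilon> n0 by (metis abs_ge_zero power2_abs power_mono)
    moreover have "(a * h1 + b * h2)^2 + (b * h1 - a * h2)^2 = k2 * n^2"
      unfolding n2 k2_def by (simp add: power2_eq_square algebra_simps)
    moreover have "(\<epsilon> * n)^2 = k2 / 4 * n^2" using k2 by (simp add: \<epsilon>_def power_mult_distrib power_divide)
    ultimately have "k2 * n^2 \<le> k2 / 2 * n^2" by linarith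
    then have "n^2 \<le> 0" using k2 by (simp add: field_simps)
    then have "n = 0" using n0 by (metis le_less_trans less_le not_le zero_less_power2)
    then show "y = q0" by (simp add: n_def)
  qed
qed

lemma swap_deriv:
  fixes f :: "real\<times>real \<Rightarrow> real" and q :: "real\<times>real"
  assumes "(f has_derivative (\<lambda>h. a * fst h + b * snd h)) (at (prod.swap q))"
  shows "((f \<circ> prod.swap) has_derivative (\<lambda>h. b * fst h + a * snd h)) (at q)"
proof -
  have ds: "((\<lambda>x::real\<times>real. (snd x, fst x)) has_derivative (\<lambda>h. (snd h, fst h))) (at q)"
    by (intro derivative_intros)
  have "((\<lambda>x. f (snd x, fst x)) has_derivative (\<lambda>h. a * fst (snd h, fst h) + b * snd (snd h, fst h))) (at q)"
    by (rule has_derivative_compose[OF ds]) (use assms in \<open>simp add: prod.swap_def\<close>)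
  then have "((\<lambda>x. f (snd x, fst x)) has_derivative (\<lambda>h. b * fst h + a * snd h)) (at q)"
    by (rule has_derivative_eq_rhs) (auto simp: fun_eq_iff)
  moreover have "f \<circ> prod.swap = (\<lambda>x. f (snd x, fst x))" by (auto simp: fun_eq_iff)
  ultimately show ?thesis by simp
qed



lemma local_case:
  fixes P Q w Px Py Qx Qy wx wy :: "real\<times>real \<Rightarrow> real"
  assumes r0: "r0 > 0"
    and dQ: "\<And>q. q \<in> ball p r0 \<Longrightarrow> (Q has_derivative (\<lambda>h. Qx q * fst h + Qy q * snd h)) (at q)"
    and dP: "\<And>q. q \<in> ball p r0 \<Longrightarrow> (P has_derivative (\<lambda>h. Px q * fst h + Py q * snd h)) (at q)"
    and dw: "\<And>q. q \<in> ball p r0 \<Longrightarrow> (w has_derivative (\<lambda>h. wx q * fst h + wy q * snd h)) (at q)"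
    and cx: "continuous_on (ball p r0) wx" and cy: "continuous_on (ball p r0) wy"
    and cQx: "continuous_on (ball p r0) Qx" and cQy: "continuous_on (ball p r0) Qy"
    and sym: "\<And>q. q \<in> ball p r0 \<Longrightarrow> Py q = Qx q"
    and br: "\<And>q. q \<in> ball p r0 \<Longrightarrow> P q * wy q - Q q * wx q = 0"
    and nz: "Qy p \<noteq> 0"
  shows "\<exists>\<delta>>0. \<delta> \<le> r0 \<and> negligible (w ` {q\<in>ball p \<delta>. P q = 0 \<and> Q q = 0})"
proof -
  define c where "c = \<bar>Qy p\<bar> / 2"
  have c: "c > 0" using nz by (simp add: c_def)
  have pin: "p \<in> ball p r0" using r0 by simp
  obtain \<delta>1 where \<delta>1: "\<delta>1 > 0" "\<And>x'. x' \<in> ball p r0 \<Longrightarrow> dist x' p < \<delta>1 \<Longrightarrow> dist (Qy x') (Qy p) < c"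
    using cQy pin c unfolding continuous_on_iff by meson
  obtain \<delta>2 where \<delta>2: "\<delta>2 > 0" "\<And>x'. x' \<in> ball p r0 \<Longrightarrow> dist x' p < \<delta>2 \<Longrightarrow> dist (Qx x') (Qx p) < 1"
    using cQx pin unfolding continuous_on_iff by (meson zero_less_one)
  define \<delta> where "\<delta> = min r0 (min \<delta>1 \<delta>2)"
  have \<delta>: "\<delta> > 0" "\<delta> \<le> r0" using r0 \<delta>1 \<delta>2 by (auto simp: \<delta>_def)
  have sub: "ball p \<delta> \<subseteq> ball p r0" using \<delta> by auto
  have "negligible (w ` {q\<in>ball p \<delta>. P q = 0 \<and> Q q = 0})"
  proof (rule local_negl[where Px=Px and Py=Py and Qx=Qx and Qy=Qy and wx=wx and wy=wy and c=c and K="\<bar>Qx p\<bar> + 1"])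
    show "open (ball p \<delta>)" "convex (ball p \<delta>)" by auto
    show "continuous_on (ball p \<delta>) wx" "continuous_on (ball p \<delta>) wy"
      using cx cy sub continuous_on_subset by blast+
    show "c > 0" by (rule c)
    fix q assume q: "q \<in> ball p \<delta>"
    then have q0: "q \<in> ball p r0" using sub by auto
    show "(Q has_derivative (\<lambda>h. Qx q * fst h + Qy q * snd h)) (at q)" by (rule dQ[OF q0])
    show "(P has_derivative (\<lambda>h. Px q * fst h + Py q * snd h)) (at q)" by (rule dP[OF q0])
    show "(w has_derivative (\<lambda>h. wx q * fst h + wy q * snd h)) (at q)" by (rule dw[OF q0])
    show "Py q = Qx q" by (rule sym[OF q0])
    have dq: "dist q p < \<delta>" using q by (simp add: dist_commute)
    have "dist (Qy q) (Qy p) < c" using \<delta>1(2)[OF q0] dq by (simp add: \<delta>_def)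
    then show "c \<le> \<bar>Qy q\<bar>" unfolding c_def dist_real_def by linarith
    have "dist (Qx q) (Qx p) < 1" using \<delta>2(2)[OF q0] dq by (simp add: \<delta>_def)
    then show "\<bar>Qx q\<bar> \<le> \<bar>Qx p\<bar> + 1" by (simp add: dist_real_def)
  next
    show "\<forall>q\<in>ball p \<delta>. P q * wy q - Q q * wx q = 0" using br sub by blast
  qed
  then show ?thesis using \<delta> by blast
qed



lemma dist_swap: "dist (prod.swap a) (prod.swap b) = dist (a::real\<times>real) b"
  by (cases a, cases b) (simp add: dist_Pair_Pair add.commute)

theorem mainTheorem7:
  fixes \<Omega> :: "(real \<times> real) set" and \<psi> :: "real \<times> real \<Rightarrow> real"
    and \<gamma> :: "real \<Rightarrow> real \<times> real" and xs :: "real \<times> real"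
  assumes "open \<Omega>" and "connected \<Omega>"
    and "real_analytic_on \<psi> \<Omega>"
    and "\<not> (\<exists>c. \<forall>x\<in>\<Omega>. \<psi> x = c)"
    and "\<forall>x\<in>\<Omega>. poisson_bracket \<psi> (laplacian \<psi>) x = 0"
    and "arc \<gamma>" and "path_image \<gamma> \<subseteq> critical_set \<psi> \<Omega>"
    and "xs \<in> path_image \<gamma>" and "vanishing_order \<psi> xs = 2"
  shows "\<forall>x\<in>connected_component_set {y\<in>\<Omega>. partial1 \<psi> y = 0 \<and> partial2 \<psi> y = 0} xs.
           vanishing_order \<psi> x = 2"
proof -
  note op = assms(1) and co = assms(2) and an = assms(3) and nc = assms(4) and brk = assms(5)
    and arc = assms(6) and pim = assms(7) and xsin = assms(8) and vo = assms(9)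
  define P where "P = partial1 \<psi>"
  define Q where "Q = partial2 \<psi>"
  define \<omega> where "\<omega> = laplacian \<psi>"
  have anP: "real_analytic_on P \<Omega>" using an_partial1[OF an] by (simp add: P_def)
  have anQ: "real_analytic_on Q \<Omega>" using an_partial2[OF an] by (simp add: Q_def)
  have anPx: "real_analytic_on (partial1 P) \<Omega>" by (rule an_partial1[OF anP])
  have anPy: "real_analytic_on (partial2 P) \<Omega>" by (rule an_partial2[OF anP])
  have anQx: "real_analytic_on (partial1 Q) \<Omega>" by (rule an_partial1[OF anQ])
  have anQy: "real_analytic_on (partial2 Q) \<Omega>" by (rule an_partial2[OF anQ])
  have \<omega>eq: "\<omega> = (\<lambda>p. partial1 P p + partial2 Q p)" by (simp add: \<omega>_def laplacian_def P_def Q_def fun_eq_iff)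
  have an\<omega>: "real_analytic_on \<omega> \<Omega>" unfolding \<omega>eq by (rule an_add[OF anPx anQy])
  have an\<omega>x: "real_analytic_on (partial1 \<omega>) \<Omega>" by (rule an_partial1[OF an\<omega>])
  have an\<omega>y: "real_analytic_on (partial2 \<omega>) \<Omega>" by (rule an_partial2[OF an\<omega>])
  have dP: "\<And>q. q \<in> \<Omega> \<Longrightarrow> (P has_derivative (\<lambda>h. partial1 P q * fst h + partial2 P q * snd h)) (at q)"
    by (rule an_deriv[OF anP])
  have dQ: "\<And>q. q \<in> \<Omega> \<Longrightarrow> (Q has_derivative (\<lambda>h. partial1 Q q * fst h + partial2 Q q * snd h)) (at q)"
    by (rule an_deriv[OF anQ])
  have d\<omega>: "\<And>q. q \<in> \<Omega> \<Longrightarrow> (\<omega> has_derivative (\<lambda>h. partial1 \<omega> q * fst h + partial2 \<omega> q * snd h)) (at q)"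
    by (rule an_deriv[OF an\<omega>])
  have cPx: "continuous_on \<Omega> (partial1 P)" by (rule an_cont[OF anPx])
  have cPy: "continuous_on \<Omega> (partial2 P)" by (rule an_cont[OF anPy])
  have cQx: "continuous_on \<Omega> (partial1 Q)" by (rule an_cont[OF anQx])
  have cQy: "continuous_on \<Omega> (partial2 Q)" by (rule an_cont[OF anQy])
  have c\<omega>x: "continuous_on \<Omega> (partial1 \<omega>)" by (rule an_cont[OF an\<omega>x])
  have c\<omega>y: "continuous_on \<Omega> (partial2 \<omega>)" by (rule an_cont[OF an\<omega>y])
  have c\<omega>: "continuous_on \<Omega> \<omega>" by (rule an_cont[OF an\<omega>])
  have sym: "\<And>q. q \<in> \<Omega> \<Longrightarrow> partial2 P q = partial1 Q q"
    unfolding P_def Q_def by (rule an_clairaut[OF an])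
  have br: "P q * partial2 \<omega> q - Q q * partial1 \<omega> q = 0" if "q \<in> \<Omega>" for q
  proof -
    have "poisson_bracket \<psi> (laplacian \<psi>) q = 0" using brk that by blast
    then show ?thesis unfolding poisson_bracket_def P_def Q_def \<omega>_def .
  qed
  define Sg where "Sg = {y\<in>\<Omega>. P y = 0 \<and> Q y = 0}"
  have loc: "\<exists>\<delta>>0. ball p \<delta> \<subseteq> \<Omega> \<and> negligible (\<omega> ` {q\<in>ball p \<delta>. P q = 0 \<and> Q q = 0})"
    if p: "p \<in> \<Omega>" "\<omega> p \<noteq> 0" for p
  proof -
    obtain r0 where r0: "r0 > 0" "ball p r0 \<subseteq> \<Omega>" using op p openE by blast
    have "partial1 P p \<noteq> 0 \<or> partial2 Q p \<noteq> 0" using p(2) unfolding \<omega>eq by auto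
    then show ?thesis
    proof
      assume Qy: "partial2 Q p \<noteq> 0"
      have "\<exists>\<delta>>0. \<delta> \<le> r0 \<and> negligible (\<omega> ` {q\<in>ball p \<delta>. P q = 0 \<and> Q q = 0})"
      proof (rule local_case[where Px="partial1 P" and Py="partial2 P" and Qx="partial1 Q" and Qy="partial2 Q" and wx="partial1 \<omega>" and wy="partial2 \<omega>"])
        show "r0 > 0" by (rule r0(1))
        show "partial2 Q p \<noteq> 0" by (rule Qy)
        show "continuous_on (ball p r0) (partial1 \<omega>)" "continuous_on (ball p r0) (partial2 \<omega>)"
          "continuous_on (ball p r0) (partial1 Q)" "continuous_on (ball p r0) (partial2 Q)"
          by (rule continuous_on_subset[OF _ r0(2)], fact)+
        fix q assume "q \<in> ball p r0"
        then have q: "q \<in> \<Omega>" using r0 by auto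
        show "(Q has_derivative (\<lambda>h. partial1 Q q * fst h + partial2 Q q * snd h)) (at q)" by (rule dQ[OF q])
        show "(P has_derivative (\<lambda>h. partial1 P q * fst h + partial2 P q * snd h)) (at q)" by (rule dP[OF q])
        show "(\<omega> has_derivative (\<lambda>h. partial1 \<omega> q * fst h + partial2 \<omega> q * snd h)) (at q)" by (rule d\<omega>[OF q])
        show "partial2 P q = partial1 Q q" by (rule sym[OF q])
        show "P q * partial2 \<omega> q - Q q * partial1 \<omega> q = 0" by (rule br[OF q])
      qed
      then obtain \<delta> where "\<delta> > 0" "\<delta> \<le> r0" "negligible (\<omega> ` {q\<in>ball p \<delta>. P q = 0 \<and> Q q = 0})" by blast
      moreover have "ball p \<delta> \<subseteq> \<Omega>" using subset_ball[OF \<open>\<delta> \<le> r0\<close>] r0(2) by blast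
      ultimately show ?thesis by blast
    next
      assume Px: "partial1 P p \<noteq> 0"
      define sw where "sw = (prod.swap :: real\<times>real \<Rightarrow> real\<times>real)"
      have swb: "sw q \<in> \<Omega>" if "q \<in> ball (sw p) r0" for q
      proof -
        have "dist p (sw q) = dist (sw p) q" using dist_swap[of "sw p" q] by (simp add: sw_def)
        then show ?thesis using that r0 by auto
      qed
      have swimg: "sw ` ball (sw p) r0 \<subseteq> \<Omega>" using swb by auto
      have cs: "continuous_on (ball (sw p) r0) (f \<circ> sw)" if "continuous_on \<Omega> f" for f :: "real\<times>real \<Rightarrow> real"
        by (rule continuous_on_compose[OF _ continuous_on_subset[OF that swimg]]) (simp add: sw_def continuous_on_swap)
      have "\<exists>\<delta>>0. \<delta> \<le> r0 \<and> negligible ((\<omega> \<circ> sw) ` {q\<in>ball (sw p) \<delta>. (Q \<circ> sw) q = 0 \<and> (P \<circ> sw) q = 0})"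
      proof (rule local_case[where Px="partial2 Q \<circ> sw" and Py="partial1 Q \<circ> sw" and Qx="partial2 P \<circ> sw" and Qy="partial1 P \<circ> sw" and wx="partial2 \<omega> \<circ> sw" and wy="partial1 \<omega> \<circ> sw"])
        show "r0 > 0" by (rule r0(1))
        show "(partial1 P \<circ> sw) (sw p) \<noteq> 0" using Px by (simp add: sw_def)
        show "continuous_on (ball (sw p) r0) (partial2 \<omega> \<circ> sw)" "continuous_on (ball (sw p) r0) (partial1 \<omega> \<circ> sw)"
          "continuous_on (ball (sw p) r0) (partial2 P \<circ> sw)" "continuous_on (ball (sw p) r0) (partial1 P \<circ> sw)"
          by (rule cs, fact)+
        fix q assume "q \<in> ball (sw p) r0"
        then have q: "sw q \<in> \<Omega>" by (rule swb)
        show "((P \<circ> sw) has_derivative (\<lambda>h. (partial2 P \<circ> sw) q * fst h + (partial1 P \<circ> sw) q * snd h)) (at q)"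
          using swap_deriv[of P "partial1 P (sw q)" "partial2 P (sw q)" q] dP[OF q] by (simp add: sw_def)
        show "((Q \<circ> sw) has_derivative (\<lambda>h. (partial2 Q \<circ> sw) q * fst h + (partial1 Q \<circ> sw) q * snd h)) (at q)"
          using swap_deriv[of Q "partial1 Q (sw q)" "partial2 Q (sw q)" q] dQ[OF q] by (simp add: sw_def)
        show "((\<omega> \<circ> sw) has_derivative (\<lambda>h. (partial2 \<omega> \<circ> sw) q * fst h + (partial1 \<omega> \<circ> sw) q * snd h)) (at q)"
          using swap_deriv[of \<omega> "partial1 \<omega> (sw q)" "partial2 \<omega> (sw q)" q] d\<omega>[OF q] by (simp add: sw_def)
        show "(partial1 Q \<circ> sw) q = (partial2 P \<circ> sw) q" using sym[OF q] by simp
        show "(Q \<circ> sw) q * (partial1 \<omega> \<circ> sw) q - (P \<circ> sw) q * (partial2 \<omega> \<circ> sw) q = 0"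
          using br[OF q] by simp
      qed
      then obtain \<delta> where \<delta>: "\<delta> > 0" "\<delta> \<le> r0"
        "negligible ((\<omega> \<circ> sw) ` {q\<in>ball (sw p) \<delta>. (Q \<circ> sw) q = 0 \<and> (P \<circ> sw) q = 0})" by blast
      have imeq: "(\<omega> \<circ> sw) ` {q\<in>ball (sw p) \<delta>. (Q \<circ> sw) q = 0 \<and> (P \<circ> sw) q = 0} = \<omega> ` {q\<in>ball p \<delta>. P q = 0 \<and> Q q = 0}"
      proof (rule set_eqI, rule iffI)
        fix v assume "v \<in> (\<omega> \<circ> sw) ` {q\<in>ball (sw p) \<delta>. (Q \<circ> sw) q = 0 \<and> (P \<circ> sw) q = 0}"
        then obtain q where q: "q \<in> ball (sw p) \<delta>" "Q (sw q) = 0" "P (sw q) = 0" "v = \<omega> (sw q)" by auto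
        have "dist p (sw q) = dist (sw p) q" using dist_swap[of "sw p" q] by (simp add: sw_def)
        then have "sw q \<in> ball p \<delta>" using q by simp
        then show "v \<in> \<omega> ` {q\<in>ball p \<delta>. P q = 0 \<and> Q q = 0}" using q by auto
      next
        fix v assume "v \<in> \<omega> ` {q\<in>ball p \<delta>. P q = 0 \<and> Q q = 0}"
        then obtain q where q: "q \<in> ball p \<delta>" "P q = 0" "Q q = 0" "v = \<omega> q" by auto
        have "dist (sw p) (sw q) = dist p q" using dist_swap[of p q] by (simp add: sw_def)
        then have "sw q \<in> ball (sw p) \<delta>" using q by simp
        moreover have "sw (sw q) = q" by (simp add: sw_def)
        ultimately show "v \<in> (\<omega> \<circ> sw) ` {q\<in>ball (sw p) \<delta>. (Q \<circ> sw) q = 0 \<and> (P \<circ> sw) q = 0}"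
          using q by (auto intro!: image_eqI[of _ _ "sw q"])
      qed
      have ng: "negligible (\<omega> ` {q\<in>ball p \<delta>. P q = 0 \<and> Q q = 0})" using \<delta>(3) unfolding imeq .
      have "ball p \<delta> \<subseteq> \<Omega>" using subset_ball[OF \<delta>(2)] r0(2) by blast
      then show ?thesis using \<delta>(1) ng by blast
    qed
  qed
  define S' where "S' = {q\<in>Sg. \<omega> q \<noteq> 0}"
  have negS: "negligible (\<omega> ` S')"
  proof -
    define F where "F = {B. open B \<and> negligible (\<omega> ` {q\<in>B. P q = 0 \<and> Q q = 0})}"
    obtain F' where F': "F' \<subseteq> F" "countable F'" "\<Union>F' = \<Union>F"
      using Lindelof_openin[of F UNIV] by (auto simp: F_def)
    have sub: "\<omega> ` S' \<subseteq> \<Union>((\<lambda>B. \<omega> ` {q\<in>B. P q = 0 \<and> Q q = 0}) ` F')"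
    proof
      fix v assume "v \<in> \<omega> ` S'"
      then obtain q where q: "q \<in> \<Omega>" "P q = 0" "Q q = 0" "\<omega> q \<noteq> 0" "v = \<omega> q"
        by (auto simp: S'_def Sg_def)
      obtain \<delta> where \<delta>: "\<delta> > 0" "ball q \<delta> \<subseteq> \<Omega>" "negligible (\<omega> ` {q'\<in>ball q \<delta>. P q' = 0 \<and> Q q' = 0})"
        using loc[OF q(1) q(4)] by blast
      have "ball q \<delta> \<in> F" using \<delta> by (simp add: F_def)
      moreover have "q \<in> ball q \<delta>" using \<delta> by simp
      ultimately have "q \<in> \<Union>F'" using F'(3) by blast
      then obtain B where B: "B \<in> F'" "q \<in> B" by blast
      then show "v \<in> \<Union>((\<lambda>B. \<omega> ` {q\<in>B. P q = 0 \<and> Q q = 0}) ` F')" using q by blast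
    qed
    have "negligible (\<Union>((\<lambda>B. \<omega> ` {q\<in>B. P q = 0 \<and> Q q = 0}) ` F'))"
    proof (rule negligible_countable_Union)
      show "countable ((\<lambda>B. \<omega> ` {q\<in>B. P q = 0 \<and> Q q = 0}) ` F')" using F'(2) by simp
      fix X assume "X \<in> (\<lambda>B. \<omega> ` {q\<in>B. P q = 0 \<and> Q q = 0}) ` F'"
      then obtain B where "B \<in> F'" "X = \<omega> ` {q\<in>B. P q = 0 \<and> Q q = 0}" by blast
      then show "negligible X" using F'(1) by (auto simp: F_def)
    qed
    then show ?thesis using sub negligible_subset by blast
  qed
  have xs\<Omega>: "xs \<in> \<Omega>" and xsvo: "vanishing_order \<psi> xs > 1"
    using pim xsin by (auto simp: critical_set_def)
  have xsPQ: "P xs = 0" "Q xs = 0" using vo_gt1_grad[OF xsvo] by (auto simp: P_def Q_def)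
  have D2: "Dk_nonzero \<psi> 2 xs"
  proof -
    have "\<exists>k. 1 \<le> k \<and> Dk_nonzero \<psi> k xs" using an_nonzero_deriv[OF op co an nc xs\<Omega>] by blast
    then have "1 \<le> vanishing_order \<psi> xs \<and> Dk_nonzero \<psi> (vanishing_order \<psi> xs) xs"
      unfolding vanishing_order_def by (rule LeastI_ex)
    then show ?thesis using vo by simp
  qed
  have hess: "partial1 P xs \<noteq> 0 \<or> partial1 Q xs \<noteq> 0 \<or> partial2 Q xs \<noteq> 0"
    using D2 unfolding Dk2 P_def Q_def .
  have \<omega>xs: "\<omega> xs \<noteq> 0"
  proof
    assume w0: "\<omega> xs = 0"
    then have tr: "partial1 P xs + partial2 Q xs = 0" by (simp add: \<omega>eq)
    have dQ': "(Q has_derivative (\<lambda>h. partial2 P xs * fst h + partial2 Q xs * snd h)) (at xs)"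
      using dQ[OF xs\<Omega>] sym[OF xs\<Omega>] by simp
    have nz: "partial1 P xs \<noteq> 0 \<or> partial2 P xs \<noteq> 0" using hess tr sym[OF xs\<Omega>] by auto
    obtain e where e: "e > 0" "\<And>y. dist y xs < e \<and> P y = 0 \<and> Q y = 0 \<Longrightarrow> y = xs"
      using isolated_zero[OF dP[OF xs\<Omega>] dQ' xsPQ tr nz] by blast
    obtain t0 where t0: "t0 \<in> {0..1}" "\<gamma> t0 = xs" using xsin by (auto simp: path_image_def)
    have "continuous_on {0..1} \<gamma>" using arc by (simp add: arc_def path_def)
    then obtain d where d: "d > 0" "\<And>t. t \<in> {0..1} \<Longrightarrow> dist t t0 < d \<Longrightarrow> dist (\<gamma> t) (\<gamma> t0) < e"
      using t0(1) e(1) unfolding continuous_on_iff by meson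
    define t1 where "t1 = (if t0 \<le> 1/2 then t0 + min (d/2) (1/2) else t0 - min (d/2) (1/2))"
    have t1: "t1 \<in> {0..1}" "t1 \<noteq> t0" "dist t1 t0 < d"
      using t0(1) d(1) by (auto simp: t1_def dist_real_def)
    have g1: "\<gamma> t1 \<in> path_image \<gamma>" using t1(1) by (simp add: path_image_def)
    then have "\<gamma> t1 \<in> \<Omega>" "vanishing_order \<psi> (\<gamma> t1) > 1" using pim by (auto simp: critical_set_def)
    then have "P (\<gamma> t1) = 0" "Q (\<gamma> t1) = 0" using vo_gt1_grad by (auto simp: P_def Q_def)
    moreover have "dist (\<gamma> t1) xs < e" using d(2)[OF t1(1,3)] t0(2) by simp
    ultimately have "\<gamma> t1 = \<gamma> t0" using e(2) t0(2) by blast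
    then have "t1 = t0" using arc t1(1) t0(1) by (auto simp: arc_def inj_on_def)
    then show False using t1(2) by simp
  qed
  define C where "C = connected_component_set Sg xs"
  have CS: "C \<subseteq> Sg" by (simp add: C_def connected_component_subset)
  have xsC: "xs \<in> C" using xs\<Omega> xsPQ by (simp add: C_def Sg_def)
  have C\<Omega>: "C \<subseteq> \<Omega>" using CS by (auto simp: Sg_def)
  have connC: "connected (\<omega> ` C)"
    by (rule connected_continuous_image[OF continuous_on_subset[OF c\<omega> C\<Omega>]]) (simp add: C_def connected_connected_component)
  have const: "\<omega> x = \<omega> xs" if x: "x \<in> C" for x
  proof (rule ccontr)
    assume ne: "\<omega> x \<noteq> \<omega> xs"
    define a where "a = \<omega> xs"
    define b where "b = \<omega> x"
    define m where "m = (if 0 < a * b then b else a / 2)"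
    have a0: "a \<noteq> 0" using \<omega>xs by (simp add: a_def)
    have ma: "m \<noteq> a" using ne a0 by (auto simp: m_def a_def b_def)
    have nz: "y \<noteq> 0" if "min a m \<le> y" "y \<le> max a m" for y
    proof (cases "a > 0")
      case True
      then have "m > 0" by (auto simp: m_def zero_less_mult_iff)
      then show ?thesis using that True by auto
    next
      case False
      then have an: "a < 0" using a0 by simp
      then have "m < 0" by (auto simp: m_def zero_less_mult_iff)
      then show ?thesis using that an by auto
    qed
    have bet: "min a b \<le> min a m \<and> max a m \<le> max a b"
    proof (cases "0 < a * b")
      case True then show ?thesis by (simp add: m_def)
    next
      case False
      then show ?thesis using a0 by (auto simp: m_def zero_less_mult_iff not_less mult_le_0_iff)
    qed
    have aC: "a \<in> \<omega> ` C" using xsC by (simp add: a_def)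
    have bC: "b \<in> \<omega> ` C" using x by (simp add: b_def)
    have J: "{min a m..max a m} \<subseteq> \<omega> ` S'"
    proof
      fix y assume y: "y \<in> {min a m..max a m}"
      have mn: "min a b \<in> \<omega> ` C" "max a b \<in> \<omega> ` C" using aC bC by (auto simp: min_def max_def)
      have "y \<in> \<omega> ` C"
        using connC[unfolded connected_iff_interval] mn y bet by auto
      then obtain c where c: "c \<in> C" "y = \<omega> c" by blast
      have "y \<noteq> 0" using nz y by auto
      then have "c \<in> S'" using c CS by (auto simp: S'_def)
      then show "y \<in> \<omega> ` S'" using c by blast
    qed
    have "negligible {min a m..max a m}" using negligible_subset[OF negS J] .
    moreover have "min a m < max a m" using ma by (auto simp: min_def max_def)
    ultimately show False using negligible_interval(1)[of "min a m" "max a m"] by auto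
  qed
  have Sgeq: "{y\<in>\<Omega>. partial1 \<psi> y = 0 \<and> partial2 \<psi> y = 0} = Sg" by (simp add: Sg_def P_def Q_def)
  show ?thesis unfolding Sgeq
  proof
    fix x assume x: "x \<in> connected_component_set Sg xs"
    then have xC: "x \<in> C" by (simp add: C_def)
    then have "x \<in> Sg" using CS by auto
    then have xPQ: "partial1 \<psi> x = 0" "partial2 \<psi> x = 0" by (auto simp: Sg_def P_def Q_def)
    have "\<omega> x \<noteq> 0" using const[OF xC] \<omega>xs by simp
    then have "partial1 P x \<noteq> 0 \<or> partial2 Q x \<noteq> 0" by (auto simp: \<omega>eq)
    then have "Dk_nonzero \<psi> 2 x" unfolding Dk2 P_def Q_def by auto
    then show "vanishing_order \<psi> x = 2" by (rule vo_eq2[OF xPQ])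
  qed
qed


end
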